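(* Let $0<r_1<r_2$, $N\ge 2$, and let $h:[r_1,r_2]\times[0,\infty)\to[0,\infty)$ be continuous with $h(t,0)=0$. Let $q$ and $f$ be defined from $h$ as in the context, and consider, for $\lambda>0$, the boundary value problem $$u''(t)+\lambda q(t)f(t,u(t))=0,\quad t\in(0,1),\qquad u(0)=0=u(1). \qquad (P_\lambda)$$ Assume there exist a continuous function $b:[0,1]\to[0,\infty)$, not identically zero, and positive constants $c,\delta,R$ with $c>1$ and $0<\delta<R$ such that (i) $f(t,u)\le b(t)u$ for all $u\in(0,\delta)$, uniformly in $t\in(0,1)$, and (ii) $f(t,u)\ge c\,b(t)u$ for all $u\ge R$, uniformly in $t\in(0,1)$. Then $(P_\lambda)$ has a positive solution for every $\lambda$ with $\frac{\lambda_{1,qb}}{c}<\lambda<\lambda_{1,qb}$.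
   Context: The problem $(P_\lambda)$ arises from radial solutions of $-\Delta v=\lambda h(|x|,v)$ in the annulus $\{x\in\mathbb{R}^N: r_1<|x|<r_2\}$, $v=0$ on the boundary. The functions $q$ and $f$ are defined as follows. If $N=2$: $q(t)=\left[r_2\left(\frac{r_1}{r_2}\right)^t\log\frac{r_2}{r_1}\right]^2$ and $f(t,u)=h\!\left(r_2\left(\frac{r_1}{r_2}\right)^t,u\right)$. If $N\ge 3$: with $A=\frac{(r_1r_2)^{N-2}}{r_2^{N-2}-r_1^{N-2}}$ and $B=\frac{r_2^{N-2}}{r_2^{N-2}-r_1^{N-2}}$, $q(t)=(N-2)^{-2}\frac{A^{2/(N-2)}}{(B-t)^{2(N-1)/(N-2)}}$ and $f(t,u)=h\!\left(\left(\frac{A}{B-t}\right)^{1/(N-2)},u\right)$. In either case $q$ is continuous on $[0,1]$ and bounded between positive constants there. A positive solution of $(P_\lambda)$ is a function $u\in C([0,1])\cap C^2(0,1)$ satisfying $(P_\lambda)$ with $u(t)>0$ for $t\in(0,1)$. For a continuous $m:[0,1]\to[0,\infty)$ that is positive on a set of positive measure, $\lambda_{1,m}$ denotes the first (smallest) eigenvalue of $-u''=\lambda m(t)u$ on $(0,1)$, $u(0)=u(1)=0$; its eigenfunction $\phi_{1,m}$ satisfies $\phi_{1,m}>0$ on $(0,1)$. Here $\lambda_{1,qb}$ is this eigenvalue with $m=qb$. *)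

theory Defs
  imports "HOL-Analysis.Analysis"
begin

text \<open>Change of variables t \<mapsto> radius, for the annulus r1 < |x| < r2 in R^N.\<close>
definition radius_of :: "nat \<Rightarrow> real \<Rightarrow> real \<Rightarrow> real \<Rightarrow> real" where
  "radius_of N r1 r2 t =
     (if N = 2 then r2 * (r1 / r2) powr t
      else (let A = (r1 * r2) ^ (N - 2) / (r2 ^ (N - 2) - r1 ^ (N - 2));
                B = r2 ^ (N - 2) / (r2 ^ (N - 2) - r1 ^ (N - 2))
            in (A / (B - t)) powr (1 / real (N - 2))))"

definition qfun :: "nat \<Rightarrow> real \<Rightarrow> real \<Rightarrow> real \<Rightarrow> real" where
  "qfun N r1 r2 t =
     (if N = 2 then (r2 * (r1 / r2) powr t * ln (r2 / r1))\<^sup>2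
      else (let A = (r1 * r2) ^ (N - 2) / (r2 ^ (N - 2) - r1 ^ (N - 2));
                B = r2 ^ (N - 2) / (r2 ^ (N - 2) - r1 ^ (N - 2))
            in (real (N - 2)) powr (-2) * A powr (2 / real (N - 2))
               / (B - t) powr (2 * real (N - 1) / real (N - 2))))"

definition ffun :: "nat \<Rightarrow> real \<Rightarrow> real \<Rightarrow> (real \<Rightarrow> real \<Rightarrow> real) \<Rightarrow> real \<Rightarrow> real \<Rightarrow> real" where
  "ffun N r1 r2 h t u = h (radius_of N r1 r2 t) u"

definition C2_on_open01 :: "(real \<Rightarrow> real) \<Rightarrow> (real \<Rightarrow> real) \<Rightarrow> (real \<Rightarrow> real) \<Rightarrow> bool" where
  "C2_on_open01 u u' u'' \<longleftrightarrow>
     (\<forall>t\<in>{0<..<1}. (u has_real_derivative u' t) (at t) \<and> (u' has_real_derivative u'' t) (at t))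
     \<and> continuous_on {0<..<1} u''"

definition is_dirichlet_eigenvalue :: "(real \<Rightarrow> real) \<Rightarrow> real \<Rightarrow> bool" where
  "is_dirichlet_eigenvalue m lam \<longleftrightarrow>
     (\<exists>u u' u''. continuous_on {0..1} u \<and> C2_on_open01 u u' u''
        \<and> (\<exists>t\<in>{0..1}. u t \<noteq> 0)
        \<and> (\<forall>t\<in>{0<..<1}. - u'' t = lam * m t * u t)
        \<and> u 0 = 0 \<and> u 1 = 0)"

definition lambda1 :: "(real \<Rightarrow> real) \<Rightarrow> real" where
  "lambda1 m = Inf {lam. is_dirichlet_eigenvalue m lam}"

definition positive_solution ::
  "(real \<Rightarrow> real) \<Rightarrow> (real \<Rightarrow> real \<Rightarrow> real) \<Rightarrow> real \<Rightarrow> (real \<Rightarrow> real) \<Rightarrow> bool" where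
  "positive_solution q f lam u \<longleftrightarrow>
     continuous_on {0..1} u \<and>
     (\<exists>u' u''. C2_on_open01 u u' u'' \<and>
        (\<forall>t\<in>{0<..<1}. u'' t + lam * q t * f t (u t) = 0)) \<and>
     u 0 = 0 \<and> u 1 = 0 \<and> (\<forall>t\<in>{0<..<1}. u t > 0)"

end

theory Submission
  imports Defs "HOL-Complex_Analysis.Great_Picard"
begin


definition IntK :: "(real \<Rightarrow> real) \<Rightarrow> real \<Rightarrow> real" where
  "IntK g x = integral {0..x} (\<lambda>\<tau>. (x - \<tau>) * g \<tau>)"

lemma cont_sub01:
  fixes g :: "real \<Rightarrow> real"
  assumes "continuous_on {0..1} g" "0 \<le> a" "b \<le> 1"
  shows "continuous_on {a..b} g"
  using assms(1) by (rule continuous_on_subset) (use assms in auto)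

lemma int01:
  fixes g :: "real \<Rightarrow> real"
  assumes "continuous_on {0..1} g" "0 \<le> a" "b \<le> 1"
  shows "g integrable_on {a..b}"
  by (rule integrable_continuous_real[OF cont_sub01[OF assms]])

lemma IntK_split:
  assumes g: "continuous_on {0..1} g" and x: "x \<in> {0..1}"
  shows "IntK g x = x * integral {0..x} g - integral {0..x} (\<lambda>\<tau>. \<tau> * g \<tau>)"
proof -
  have c1: "continuous_on {0..1} (\<lambda>\<tau>. \<tau> * g \<tau>)" by (intro continuous_intros g)
  have i1: "(\<lambda>\<tau>. x * g \<tau>) integrable_on {0..x}"
    using int01[OF g, of 0 x] x by (auto intro: integrable_on_mult_right)
  have i2: "(\<lambda>\<tau>. \<tau> * g \<tau>) integrable_on {0..x}" using int01[OF c1, of 0 x] x by auto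
  have "IntK g x = integral {0..x} (\<lambda>\<tau>. x * g \<tau> - \<tau> * g \<tau>)"
    unfolding IntK_def by (simp add: algebra_simps)
  also have "\<dots> = integral {0..x} (\<lambda>\<tau>. x * g \<tau>) - integral {0..x} (\<lambda>\<tau>. \<tau> * g \<tau>)"
    by (rule integral_diff[OF i1 i2])
  finally show ?thesis by simp
qed

lemma IntK_deriv:
  assumes g: "continuous_on {0..1} g" and x: "x \<in> {0..1}"
  shows "(IntK g has_real_derivative integral {0..x} g) (at x within {0..1})"
proof -
  have c1: "continuous_on {0..1} (\<lambda>\<tau>. \<tau> * g \<tau>)" by (intro continuous_intros g)
  have d1: "((\<lambda>x. integral {0..x} g) has_real_derivative g x) (at x within {0..1})"
    by (rule integral_has_real_derivative[OF g x])
  have d2: "((\<lambda>x. integral {0..x} (\<lambda>\<tau>. \<tau> * g \<tau>)) has_real_derivative x * g x) (at x within {0..1})"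
    by (rule integral_has_real_derivative[OF c1 x])
  have d3: "((\<lambda>x. x * integral {0..x} g) has_real_derivative
      (1 * integral {0..x} g + x * g x)) (at x within {0..1})"
    using DERIV_mult[OF DERIV_ident d1] by (simp add: algebra_simps)
  have "((\<lambda>x. x * integral {0..x} g - integral {0..x} (\<lambda>\<tau>. \<tau> * g \<tau>)) has_real_derivative
      (1 * integral {0..x} g + x * g x - x * g x)) (at x within {0..1})"
    by (rule DERIV_diff[OF d3 d2])
  then have "((\<lambda>x. x * integral {0..x} g - integral {0..x} (\<lambda>\<tau>. \<tau> * g \<tau>)) has_real_derivative
      integral {0..x} g) (at x within {0..1})" by simp
  then show ?thesis
    by (rule has_field_derivative_transform_within[where d=1]) (use x IntK_split[OF g] in auto)
qed

lemma IntK_cont: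
  assumes g: "continuous_on {0..1} g"
  shows "continuous_on {0..1} (IntK g)"
  unfolding continuous_on_eq_continuous_within
  using IntK_deriv[OF g] DERIV_continuous by blast

lemma Int0_cont:
  fixes g :: "real \<Rightarrow> real"
  assumes g: "continuous_on {0..1} g"
  shows "continuous_on {0..1} (\<lambda>x. integral {0..x} g)"
  unfolding continuous_on_eq_continuous_within
  using integral_has_real_derivative[OF g] DERIV_continuous by blast


lemma Gcomp_cont:
  fixes G :: "real \<Rightarrow> real \<Rightarrow> real"
  assumes G: "continuous_on ({0..1} \<times> UNIV) (\<lambda>(t,x). G t x)" and u: "continuous_on {0..1} u"
  shows "continuous_on {0..1} (\<lambda>\<tau>. G \<tau> (u \<tau>))"
proof -
  have "continuous_on {0..1} (\<lambda>\<tau>. (\<tau>, u \<tau>))" by (intro continuous_intros u)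
  then have "continuous_on {0..1} ((\<lambda>(t,x). G t x) \<circ> (\<lambda>\<tau>. (\<tau>, u \<tau>)))"
    by (rule continuous_on_compose) (rule continuous_on_subset[OF G], auto)
  then show ?thesis by (simp add: o_def)
qed

lemma IntK_diff:
  fixes g1 g2 :: "real \<Rightarrow> real"
  assumes "continuous_on {0..1} g1" "continuous_on {0..1} g2" "x \<in> {0..1}"
  shows "IntK (\<lambda>\<tau>. g1 \<tau> - g2 \<tau>) x = IntK g1 x - IntK g2 x"
proof -
  have c1: "continuous_on {0..1} (\<lambda>\<tau>. (x - \<tau>) * g1 \<tau>)" "continuous_on {0..1} (\<lambda>\<tau>. (x - \<tau>) * g2 \<tau>)"
    by (intro continuous_intros assms)+
  show ?thesis unfolding IntK_def
    using integral_diff[OF int01[OF c1(1), of 0 x] int01[OF c1(2), of 0 x]] assms(3)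
    by (simp add: algebra_simps)
qed

lemma kernel_exp:
  fixes \<gamma> x :: real
  assumes "\<gamma> > 0" "x \<ge> 0"
  shows "integral {0..x} (\<lambda>\<tau>. (x - \<tau>) * exp (\<gamma> * \<tau>)) \<le> exp (\<gamma> * x) / \<gamma>\<^sup>2"
proof -
  define Fa where "Fa \<tau> = (x - \<tau>) * exp (\<gamma> * \<tau>) / \<gamma> + exp (\<gamma> * \<tau>) / \<gamma>\<^sup>2" for \<tau>
  have "(Fa has_real_derivative (x - \<tau>) * exp (\<gamma> * \<tau>)) (at \<tau> within {0..x})" for \<tau>
    unfolding Fa_def using assms
    by (auto intro!: derivative_eq_intros simp: field_simps power2_eq_square)
  then have "((\<lambda>\<tau>. (x - \<tau>) * exp (\<gamma> * \<tau>)) has_integral (Fa x - Fa 0)) {0..x}"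
    using assms by (intro fundamental_theorem_of_calculus) (auto simp: has_real_derivative_iff_has_vector_derivative[symmetric])
  then have "integral {0..x} (\<lambda>\<tau>. (x - \<tau>) * exp (\<gamma> * \<tau>)) = Fa x - Fa 0" by (rule integral_unique)
  also have "\<dots> = exp (\<gamma> * x) / \<gamma>\<^sup>2 - x / \<gamma> - 1 / \<gamma>\<^sup>2" unfolding Fa_def by simp
  also have "\<dots> \<le> exp (\<gamma> * x) / \<gamma>\<^sup>2"
  proof -
    have "0 \<le> x / \<gamma>" "0 \<le> 1 / \<gamma>\<^sup>2" using assms by auto
    then show ?thesis by linarith
  qed
  finally show ?thesis .
qed

lemma kernel_bound:
  fixes h :: "real \<Rightarrow> real"
  assumes h: "continuous_on {0..1} h" and x: "x \<in> {0..1}" and g: "\<gamma> > 0"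
    and hb: "\<And>\<tau>. \<tau> \<in> {0..x} \<Longrightarrow> \<bar>h \<tau>\<bar> \<le> K * exp (\<gamma> * \<tau>)"
  shows "\<bar>IntK h x\<bar> \<le> K * exp (\<gamma> * x) / \<gamma>\<^sup>2"
proof -
  have c1: "continuous_on {0..1} (\<lambda>\<tau>. (x - \<tau>) * h \<tau>)" by (intro continuous_intros h)
  have c2: "continuous_on {0..1} (\<lambda>\<tau>. (x - \<tau>) * exp (\<gamma> * \<tau>))" by (intro continuous_intros)
  have "\<bar>IntK h x\<bar> \<le> integral {0..x} (\<lambda>\<tau>. K * ((x - \<tau>) * exp (\<gamma> * \<tau>)))"
    unfolding IntK_def real_norm_def[symmetric]
  proof (rule integral_norm_bound_integral)
    show "(\<lambda>\<tau>. (x - \<tau>) * h \<tau>) integrable_on {0..x}" using int01[OF c1, of 0 x] x by auto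
    show "(\<lambda>\<tau>. K * ((x - \<tau>) * exp (\<gamma> * \<tau>))) integrable_on {0..x}"
      using int01[OF c2, of 0 x] x by (auto intro: integrable_on_mult_right)
    fix \<tau> assume t: "\<tau> \<in> {0..x}"
    have "norm ((x - \<tau>) * h \<tau>) = (x - \<tau>) * \<bar>h \<tau>\<bar>" using t by (simp add: abs_mult)
    also have "\<dots> \<le> (x - \<tau>) * (K * exp (\<gamma> * \<tau>))" using t hb[OF t] by (intro mult_left_mono) auto
    finally show "norm ((x - \<tau>) * h \<tau>) \<le> K * ((x - \<tau>) * exp (\<gamma> * \<tau>))" by (simp add: algebra_simps)
  qed
  also have "\<dots> = K * integral {0..x} (\<lambda>\<tau>. (x - \<tau>) * exp (\<gamma> * \<tau>))" by simp
  also have "\<dots> \<le> K * (exp (\<gamma> * x) / \<gamma>\<^sup>2)"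
  proof (rule mult_left_mono)
    show "integral {0..x} (\<lambda>\<tau>. (x - \<tau>) * exp (\<gamma> * \<tau>)) \<le> exp (\<gamma> * x) / \<gamma>\<^sup>2"
      using kernel_exp[OF g] x by auto
    have "\<bar>h 0\<bar> \<le> K * exp (\<gamma> * 0)" using hb[of 0] x by auto
    then show "0 \<le> K" by simp
  qed
  finally show ?thesis by simp
qed

lemma kernel_bound2:
  fixes h :: "real \<Rightarrow> real"
  assumes h: "continuous_on {0..1} h" and x: "x \<in> {0..1}"
    and hb: "\<And>\<tau>. \<tau> \<in> {0..x} \<Longrightarrow> \<bar>h \<tau>\<bar> \<le> D"
  shows "\<bar>IntK h x\<bar> \<le> D"
proof -
  have c1: "continuous_on {0..1} (\<lambda>\<tau>. (x - \<tau>) * h \<tau>)" by (intro continuous_intros h)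
  have D: "0 \<le> D" using hb[of 0] x by auto
  have "\<bar>IntK h x\<bar> \<le> integral {0..x} (\<lambda>\<tau>. D)"
    unfolding IntK_def real_norm_def[symmetric]
  proof (rule integral_norm_bound_integral)
    show "(\<lambda>\<tau>. (x - \<tau>) * h \<tau>) integrable_on {0..x}" using int01[OF c1, of 0 x] x by auto
    show "(\<lambda>\<tau>. D) integrable_on {0..x}" by (rule integrable_continuous_real) (rule continuous_on_const)
    fix \<tau> assume t: "\<tau> \<in> {0..x}"
    have "norm ((x - \<tau>) * h \<tau>) = (x - \<tau>) * \<bar>h \<tau>\<bar>" using t by (simp add: abs_mult)
    also have "\<dots> \<le> 1 * D" using t x hb[OF t] by (intro mult_mono) auto
    finally show "norm ((x - \<tau>) * h \<tau>) \<le> D" by simp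
  qed
  also have "\<dots> = x * D" using x by simp
  also have "\<dots> \<le> 1 * D" using x D by (intro mult_right_mono) auto
  finally show ?thesis by simp
qed


definition c01 :: "real \<Rightarrow> real" where "c01 t = max 0 (min 1 t)"

lemma c01_in: "c01 t \<in> {0..1}" and c01_id: "t \<in> {0..1} \<Longrightarrow> c01 t = t"
  and c01_cont: "continuous_on UNIV c01"
  unfolding c01_def by (auto intro!: continuous_intros)

lemma ode_exists:
  fixes G :: "real \<Rightarrow> real \<Rightarrow> real" and L s :: real
  assumes Gc: "continuous_on ({0..1} \<times> UNIV) (\<lambda>(t,x). G t x)"
    and GL: "\<And>t x y. t \<in> {0..1} \<Longrightarrow> \<bar>G t x - G t y\<bar> \<le> L * \<bar>x - y\<bar>" and L: "0 \<le> L"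
  shows "\<exists>u. continuous_on {0..1} u \<and> (\<forall>t\<in>{0..1}. u t = s * t - IntK (\<lambda>\<tau>. G \<tau> (u \<tau>)) t)"
proof -
  define \<gamma> where "\<gamma> = L + 1"
  have g0: "\<gamma> > 0" using L by (simp add: \<gamma>_def)
  have gL: "L / \<gamma>\<^sup>2 \<le> 1/2"
  proof -
    have "2 * L \<le> \<gamma>\<^sup>2" unfolding \<gamma>_def by (simp add: power2_eq_square algebra_simps)
    then show ?thesis using g0 by (simp add: field_simps)
  qed
  define P where "P v x = (s * x - IntK (\<lambda>\<tau>. G \<tau> (exp (\<gamma> * \<tau>) * v \<tau>)) x) / exp (\<gamma> * x)"
    for v :: "real \<Rightarrow> real" and x
  have gc: "continuous_on {0..1} (\<lambda>\<tau>. G \<tau> (exp (\<gamma> * \<tau>) * v \<tau>))" if "continuous_on {0..1} v" for v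
    by (rule Gcomp_cont[OF Gc]) (intro continuous_intros that)
  have Pc: "continuous_on {0..1} (P v)" if "continuous_on {0..1} v" for v
    unfolding P_def by (intro continuous_intros IntK_cont gc that) auto
  have Pin: "(\<lambda>t. P (apply_bcontfun v) (c01 t)) \<in> bcontfun" for v :: "real \<Rightarrow>\<^sub>C real"
  proof -
    have pc: "continuous_on {0..1} (P (apply_bcontfun v))" by (rule Pc) simp
    have "continuous_on UNIV (\<lambda>t. P (apply_bcontfun v) (c01 t))"
      by (rule continuous_on_compose2[OF pc c01_cont]) (auto intro: c01_in)
    moreover have "bounded (range (\<lambda>t. P (apply_bcontfun v) (c01 t)))"
    proof -
      have "compact (P (apply_bcontfun v) ` {0..1})" by (intro compact_continuous_image pc) auto
      then have "bounded (P (apply_bcontfun v) ` {0..1})" by (rule compact_imp_bounded)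
      moreover have "range (\<lambda>t. P (apply_bcontfun v) (c01 t)) \<subseteq> P (apply_bcontfun v) ` {0..1}"
        using c01_in by auto
      ultimately show ?thesis by (rule bounded_subset)
    qed
    ultimately show ?thesis unfolding bcontfun_def by simp
  qed
  define T where "T v = Bcontfun (\<lambda>t. P (apply_bcontfun v) (c01 t))" for v
  have Tapp: "apply_bcontfun (T v) t = P (apply_bcontfun v) (c01 t)" for v t
    unfolding T_def using Bcontfun_inverse[OF Pin] by simp
  have contr: "dist (T v1) (T v2) \<le> 1/2 * dist v1 v2" for v1 v2
  proof (rule dist_bound)
    fix t
    define x where "x = c01 t"
    have x: "x \<in> {0..1}" unfolding x_def by (rule c01_in)
    define d where "d = dist v1 v2"
    define g1 where "g1 \<tau> = G \<tau> (exp (\<gamma> * \<tau>) * apply_bcontfun v1 \<tau>)" for \<tau>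
    define g2 where "g2 \<tau> = G \<tau> (exp (\<gamma> * \<tau>) * apply_bcontfun v2 \<tau>)" for \<tau>
    have c1: "continuous_on {0..1} g1" "continuous_on {0..1} g2" unfolding g1_def g2_def by (rule gc, simp)+
    have "\<bar>IntK (\<lambda>\<tau>. g1 \<tau> - g2 \<tau>) x\<bar> \<le> (L * d) * exp (\<gamma> * x) / \<gamma>\<^sup>2"
    proof (rule kernel_bound[OF _ x g0])
      show "continuous_on {0..1} (\<lambda>\<tau>. g1 \<tau> - g2 \<tau>)" by (intro continuous_intros c1)
      fix \<tau> assume t: "\<tau> \<in> {0..x}"
      then have t1: "\<tau> \<in> {0..1}" using x by auto
      have "\<bar>g1 \<tau> - g2 \<tau>\<bar> \<le> L * \<bar>exp (\<gamma> * \<tau>) * apply_bcontfun v1 \<tau> - exp (\<gamma> * \<tau>) * apply_bcontfun v2 \<tau>\<bar>"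
        unfolding g1_def g2_def by (rule GL[OF t1])
      also have "\<dots> = L * (exp (\<gamma> * \<tau>) * dist (apply_bcontfun v1 \<tau>) (apply_bcontfun v2 \<tau>))"
        by (simp add: dist_real_def abs_mult right_diff_distrib[symmetric])
      also have "\<dots> \<le> L * (exp (\<gamma> * \<tau>) * d)"
        unfolding d_def using L by (intro mult_left_mono dist_bounded) auto
      finally show "\<bar>g1 \<tau> - g2 \<tau>\<bar> \<le> L * d * exp (\<gamma> * \<tau>)" by (simp add: algebra_simps)
    qed
    then have "\<bar>IntK g1 x - IntK g2 x\<bar> \<le> (L * d) * exp (\<gamma> * x) / \<gamma>\<^sup>2"
      using IntK_diff[OF c1 x] by simp
    then have "\<bar>IntK g1 x - IntK g2 x\<bar> / exp (\<gamma> * x) \<le> L * d / \<gamma>\<^sup>2"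
      by (simp add: divide_le_eq field_simps)
    also have "\<dots> = (L / \<gamma>\<^sup>2) * d" by simp
    also have "\<dots> \<le> 1/2 * d" using gL unfolding d_def by (intro mult_right_mono) auto
    finally have *: "\<bar>IntK g1 x - IntK g2 x\<bar> / exp (\<gamma> * x) \<le> 1/2 * d" .
    have "dist (apply_bcontfun (T v1) t) (apply_bcontfun (T v2) t) = \<bar>IntK g1 x - IntK g2 x\<bar> / exp (\<gamma> * x)"
      unfolding Tapp P_def dist_real_def g1_def g2_def x_def
      by (simp add: diff_divide_distrib[symmetric] abs_minus_commute)
    then show "dist (apply_bcontfun (T v1) t) (apply_bcontfun (T v2) t) \<le> 1/2 * dist v1 v2"
      using * unfolding d_def by simp
  qed
  obtain v where v: "T v = v" using banach_fix_type[of "1/2" T] contr by auto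
  define u where "u t = exp (\<gamma> * t) * apply_bcontfun v t" for t
  show ?thesis
  proof (intro exI conjI ballI)
    show "continuous_on {0..1} u" unfolding u_def by (intro continuous_intros) simp
    fix t :: real assume t: "t \<in> {0..1}"
    have "apply_bcontfun v t = P (apply_bcontfun v) t"
      using Tapp[of v t] v c01_id[OF t] by simp
    then have "u t = s * t - IntK (\<lambda>\<tau>. G \<tau> (exp (\<gamma> * \<tau>) * apply_bcontfun v \<tau>)) t"
      unfolding u_def P_def by simp
    then show "u t = s * t - IntK (\<lambda>\<tau>. G \<tau> (u \<tau>)) t" unfolding u_def by simp
  qed
qed

lemma ode_stab:
  fixes G1 G2 :: "real \<Rightarrow> real \<Rightarrow> real" and L s1 s2 D :: real
  assumes G1c: "continuous_on ({0..1} \<times> UNIV) (\<lambda>(t,x). G1 t x)"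
    and G2c: "continuous_on ({0..1} \<times> UNIV) (\<lambda>(t,x). G2 t x)"
    and GL: "\<And>t x y. t \<in> {0..1} \<Longrightarrow> \<bar>G1 t x - G1 t y\<bar> \<le> L * \<bar>x - y\<bar>" and L: "0 \<le> L"
    and u1c: "continuous_on {0..1} u1" and u2c: "continuous_on {0..1} u2"
    and u1: "\<And>t. t \<in> {0..1} \<Longrightarrow> u1 t = s1 * t - IntK (\<lambda>\<tau>. G1 \<tau> (u1 \<tau>)) t"
    and u2: "\<And>t. t \<in> {0..1} \<Longrightarrow> u2 t = s2 * t - IntK (\<lambda>\<tau>. G2 \<tau> (u2 \<tau>)) t"
    and D: "\<And>t. t \<in> {0..1} \<Longrightarrow> \<bar>G1 t (u2 t) - G2 t (u2 t)\<bar> \<le> D"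
  shows "\<And>t. t \<in> {0..1} \<Longrightarrow> \<bar>u1 t - u2 t\<bar> \<le> exp (L + 1) * (2 * (\<bar>s1 - s2\<bar> + D))"
proof -
  define \<gamma> where "\<gamma> = L + 1"
  have g0: "\<gamma> > 0" using L by (simp add: \<gamma>_def)
  have gL: "L / \<gamma>\<^sup>2 \<le> 1/2"
  proof -
    have "2 * L \<le> \<gamma>\<^sup>2" unfolding \<gamma>_def by (simp add: power2_eq_square algebra_simps)
    then show ?thesis using g0 by (simp add: field_simps)
  qed
  define w where "w t = \<bar>u1 t - u2 t\<bar> / exp (\<gamma> * t)" for t
  have wc: "continuous_on {0..1} w" unfolding w_def by (intro continuous_intros u1c u2c) auto
  obtain ts where ts: "ts \<in> {0..1}" and tsmax: "\<And>t. t \<in> {0..1} \<Longrightarrow> w t \<le> w ts"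
    using continuous_attains_sup[OF compact_Icc _ wc] by fastforce
  define d where "d = w ts"
  have d0: "0 \<le> d" unfolding d_def w_def by simp
  define a where "a \<tau> = G1 \<tau> (u1 \<tau>) - G1 \<tau> (u2 \<tau>)" for \<tau>
  define b where "b \<tau> = G1 \<tau> (u2 \<tau>) - G2 \<tau> (u2 \<tau>)" for \<tau>
  have cg: "continuous_on {0..1} (\<lambda>\<tau>. G1 \<tau> (u1 \<tau>))" "continuous_on {0..1} (\<lambda>\<tau>. G1 \<tau> (u2 \<tau>))"
       "continuous_on {0..1} (\<lambda>\<tau>. G2 \<tau> (u2 \<tau>))"
    by (rule Gcomp_cont, fact, fact)+
  have ca: "continuous_on {0..1} a" "continuous_on {0..1} b" unfolding a_def b_def by (intro continuous_intros cg)+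
  have key: "w t \<le> \<bar>s1 - s2\<bar> + d / 2 + D" if t: "t \<in> {0..1}" for t
  proof -
    have e: "u1 t - u2 t = (s1 - s2) * t - (IntK a t + IntK b t)"
    proof -
      have "IntK a t = IntK (\<lambda>\<tau>. G1 \<tau> (u1 \<tau>)) t - IntK (\<lambda>\<tau>. G1 \<tau> (u2 \<tau>)) t"
        unfolding a_def by (rule IntK_diff[OF cg(1,2) t])
      moreover have "IntK b t = IntK (\<lambda>\<tau>. G1 \<tau> (u2 \<tau>)) t - IntK (\<lambda>\<tau>. G2 \<tau> (u2 \<tau>)) t"
        unfolding b_def by (rule IntK_diff[OF cg(2,3) t])
      ultimately show ?thesis using u1[OF t] u2[OF t] by (simp add: algebra_simps)
    qed
    have ia: "\<bar>IntK a t\<bar> \<le> (L * d) * exp (\<gamma> * t) / \<gamma>\<^sup>2"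
    proof (rule kernel_bound[OF ca(1) t g0])
      fix \<tau> assume "\<tau> \<in> {0..t}"
      then have t1: "\<tau> \<in> {0..1}" using t by auto
      have 1: "\<bar>a \<tau>\<bar> \<le> L * \<bar>u1 \<tau> - u2 \<tau>\<bar>" unfolding a_def by (rule GL[OF t1])
      have 2: "\<bar>u1 \<tau> - u2 \<tau>\<bar> = w \<tau> * exp (\<gamma> * \<tau>)" unfolding w_def by simp
      have 3: "w \<tau> * exp (\<gamma> * \<tau>) \<le> d * exp (\<gamma> * \<tau>)" using tsmax[OF t1] unfolding d_def by simp
      have "L * \<bar>u1 \<tau> - u2 \<tau>\<bar> \<le> L * (d * exp (\<gamma> * \<tau>))" using 2 3 L by (simp add: mult_left_mono)
      then show "\<bar>a \<tau>\<bar> \<le> L * d * exp (\<gamma> * \<tau>)" using 1 by simp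
    qed
    have ib: "\<bar>IntK b t\<bar> \<le> D"
      by (rule kernel_bound2[OF ca(2) t]) (use t D in \<open>auto simp: b_def\<close>)
    have "\<bar>u1 t - u2 t\<bar> \<le> \<bar>s1 - s2\<bar> * t + (L * d) * exp (\<gamma> * t) / \<gamma>\<^sup>2 + D"
    proof -
      have "\<bar>(s1 - s2) * t\<bar> = \<bar>s1 - s2\<bar> * t" using t by (simp add: abs_mult)
      then show ?thesis using e ia ib by linarith
    qed
    also have "\<dots> \<le> (\<bar>s1 - s2\<bar> + D) * exp (\<gamma> * t) + (L * d) * exp (\<gamma> * t) / \<gamma>\<^sup>2"
    proof -
      have "1 \<le> exp (\<gamma> * t)" using t g0 by auto
      moreover have "0 \<le> D" using D[of 0] by (meson abs_ge_zero atLeastAtMost_iff order_trans zero_le_one order_refl)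
      ultimately have "\<bar>s1 - s2\<bar> * t + D \<le> (\<bar>s1 - s2\<bar> + D) * exp (\<gamma> * t)"
      proof -
        assume e1: "1 \<le> exp (\<gamma> * t)" and D0: "0 \<le> D"
        have "\<bar>s1 - s2\<bar> * t \<le> \<bar>s1 - s2\<bar> * 1" using t by (intro mult_left_mono) auto
        also have "\<dots> \<le> \<bar>s1 - s2\<bar> * exp (\<gamma> * t)" using e1 by (intro mult_left_mono) auto
        finally have "\<bar>s1 - s2\<bar> * t \<le> \<bar>s1 - s2\<bar> * exp (\<gamma> * t)" .
        moreover have "D * 1 \<le> D * exp (\<gamma> * t)" using e1 D0 by (intro mult_left_mono) auto
        ultimately show ?thesis by (simp add: distrib_right)
      qed
      then show ?thesis by simp
    qed
    finally have "w t \<le> ((\<bar>s1 - s2\<bar> + D) * exp (\<gamma> * t) + (L * d) * exp (\<gamma> * t) / \<gamma>\<^sup>2) / exp (\<gamma> * t)"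
      unfolding w_def by (simp add: divide_right_mono)
    also have "\<dots> = \<bar>s1 - s2\<bar> + D + (L / \<gamma>\<^sup>2) * d" by (simp add: field_simps)
    also have "\<dots> \<le> \<bar>s1 - s2\<bar> + D + 1/2 * d" using mult_right_mono[OF gL d0] by simp
    finally show ?thesis by simp
  qed
  have dd: "d \<le> 2 * (\<bar>s1 - s2\<bar> + D)" using key[OF ts] unfolding d_def by simp
  fix t :: real assume t: "t \<in> {0..1}"
  have "\<bar>u1 t - u2 t\<bar> = w t * exp (\<gamma> * t)" unfolding w_def by simp
  also have "\<dots> \<le> d * exp (\<gamma> * 1)" using tsmax[OF t] t g0 d0 unfolding d_def
    by (intro mult_mono) (auto simp: w_def)
  also have "\<dots> \<le> 2 * (\<bar>s1 - s2\<bar> + D) * exp (\<gamma> * 1)" using dd by (intro mult_right_mono) auto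
  finally show "\<bar>u1 t - u2 t\<bar> \<le> exp (L + 1) * (2 * (\<bar>s1 - s2\<bar> + D))" by (simp add: \<gamma>_def algebra_simps)
qed


lemma integral_pos:
  fixes f :: "real \<Rightarrow> real"
  assumes "continuous_on {a..b} f" "a < b" "\<And>x. x \<in> {a..b} \<Longrightarrow> f x \<ge> 0"
    "c \<in> {a..b}" "f c > 0"
  shows "integral {a..b} f > 0"
proof -
  have "0 \<le> integral {a..b} f"
    by (rule integral_nonneg) (use assms integrable_continuous_real in auto)
  moreover have "integral {a..b} f \<noteq> 0" using integral_eq_0_iff[OF assms(1-3)] assms(4,5) by auto
  ultimately show ?thesis by simp
qed

lemma deriv_sub:
  assumes "(f has_real_derivative d) (at t within {0..1})" "{a..b} \<subseteq> {0..1}"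
  shows "(f has_real_derivative d) (at t within {a..b})"
  using assms has_field_derivative_subset by blast

lemma mvt01:
  fixes f f' :: "real \<Rightarrow> real"
  assumes d: "\<And>t. t \<in> {0..1} \<Longrightarrow> (f has_real_derivative f' t) (at t within {0..1})"
    and ab: "0 \<le> a" "a < b" "b \<le> 1"
  shows "\<exists>x\<in>{a<..<b}. f b - f a = f' x * (b - a)"
proof -
  have "\<exists>x\<in>{a<..<b}. f b - f a = (\<lambda>h. f' x * h) (b - a)"
  proof (rule mvt_simple[OF ab(2), where f'="\<lambda>x h. f' x * h"])
    fix x assume "a \<le> x" "x \<le> b"
    then have "(f has_real_derivative f' x) (at x within {a..b})"
      using ab by (intro deriv_sub[OF d]) auto
    then show "(f has_derivative (\<lambda>h. f' x * h)) (at x within {a..b})"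
      by (rule has_derivative_eq_rhs[OF iffD1[OF has_field_derivative_def]]) (auto simp: fun_eq_iff)
  qed
  then show ?thesis by simp
qed

lemma mono01:
  fixes f f' :: "real \<Rightarrow> real"
  assumes d: "\<And>t. t \<in> {0..1} \<Longrightarrow> (f has_real_derivative f' t) (at t within {0..1})"
    and np: "\<And>t. t \<in> {a..b} \<Longrightarrow> f' t \<le> 0"
    and ab: "0 \<le> a" "a \<le> b" "b \<le> 1"
  shows "f b \<le> f a"
proof (cases "a = b")
  case False
  then obtain x where x: "x \<in> {a<..<b}" "f b - f a = f' x * (b - a)" using mvt01[OF d, of a b] ab by auto
  have "f' x * (b - a) \<le> 0" using np[of x] x ab by (intro mult_nonpos_nonneg) auto
  then show ?thesis using x by simp
qed simp

lemma mono01':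
  fixes f f' :: "real \<Rightarrow> real"
  assumes d: "\<And>t. t \<in> {0..1} \<Longrightarrow> (f has_real_derivative f' t) (at t within {0..1})"
    and np: "\<And>t. t \<in> {a..b} \<Longrightarrow> f' t \<ge> 0"
    and ab: "0 \<le> a" "a \<le> b" "b \<le> 1"
  shows "f a \<le> f b"
proof -
  have "(\<lambda>t. - f t) b \<le> (\<lambda>t. - f t) a"
    by (rule mono01[where f'="\<lambda>t. - f' t"]) (use d np ab in \<open>auto intro: derivative_intros\<close>)
  then show ?thesis by simp
qed

lemma concave01:
  fixes f f' :: "real \<Rightarrow> real"
  assumes d: "\<And>t. t \<in> {0..1} \<Longrightarrow> (f has_real_derivative f' t) (at t within {0..1})"
    and dec: "\<And>x y. 0 \<le> x \<Longrightarrow> x \<le> y \<Longrightarrow> y \<le> 1 \<Longrightarrow> f' y \<le> f' x"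
    and ab: "0 \<le> a" "a < x" "x < b" "b \<le> 1"
  shows "(b - x) * f a + (x - a) * f b \<le> (b - a) * f x"
proof -
  obtain y1 where y1: "y1 \<in> {a<..<x}" "f x - f a = f' y1 * (x - a)" using mvt01[OF d, of a x] ab by auto
  obtain y2 where y2: "y2 \<in> {x<..<b}" "f b - f x = f' y2 * (b - x)" using mvt01[OF d, of x b] ab by auto
  have "f' y2 \<le> f' y1" using y1 y2 ab by (intro dec) auto
  then have "(f b - f x) * (x - a) \<le> (f x - f a) * (b - x)"
    using y1 y2 ab by (simp add: mult_right_mono mult_left_mono mult.assoc[symmetric])
  then show ?thesis by (simp add: algebra_simps)
qed

definition isol :: "(real \<Rightarrow> real \<Rightarrow> real) \<Rightarrow> real \<Rightarrow> (real \<Rightarrow> real) \<Rightarrow> bool" where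
  "isol G s u \<longleftrightarrow> continuous_on {0..1} u \<and> (\<forall>t\<in>{0..1}. u t = s * t - IntK (\<lambda>\<tau>. G \<tau> (u \<tau>)) t)"

definition dsol :: "(real \<Rightarrow> real \<Rightarrow> real) \<Rightarrow> real \<Rightarrow> (real \<Rightarrow> real) \<Rightarrow> real \<Rightarrow> real" where
  "dsol G s u t = s - integral {0..t} (\<lambda>\<tau>. G \<tau> (u \<tau>))"

lemma isol_0: "isol G s u \<Longrightarrow> u 0 = 0"
  unfolding isol_def IntK_def by auto

lemma isol_deriv:
  fixes G :: "real \<Rightarrow> real \<Rightarrow> real"
  assumes Gc: "continuous_on ({0..1} \<times> UNIV) (\<lambda>(t,x). G t x)" and u: "isol G s u" and t: "t \<in> {0..1}"
  shows "(u has_real_derivative dsol G s u t) (at t within {0..1})"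
    and "(dsol G s u has_real_derivative - G t (u t)) (at t within {0..1})"
proof -
  have gc: "continuous_on {0..1} (\<lambda>\<tau>. G \<tau> (u \<tau>))" using u unfolding isol_def by (intro Gcomp_cont[OF Gc]) auto
  have "((\<lambda>t. s * t - IntK (\<lambda>\<tau>. G \<tau> (u \<tau>)) t) has_real_derivative s * 1 - integral {0..t} (\<lambda>\<tau>. G \<tau> (u \<tau>)))
      (at t within {0..1})"
    by (intro DERIV_diff DERIV_cmult[OF DERIV_ident] IntK_deriv[OF gc t])
  then have "((\<lambda>t. s * t - IntK (\<lambda>\<tau>. G \<tau> (u \<tau>)) t) has_real_derivative dsol G s u t)
      (at t within {0..1})" by (simp add: dsol_def)
  then show "(u has_real_derivative dsol G s u t) (at t within {0..1})"
    by (rule has_field_derivative_transform_within[where d=1]) (use t u in \<open>auto simp: isol_def\<close>)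
  show "(dsol G s u has_real_derivative - G t (u t)) (at t within {0..1})"
    unfolding dsol_def using DERIV_diff[OF DERIV_const integral_has_real_derivative[OF gc t]] by simp
qed

lemma isol_dcont:
  fixes G :: "real \<Rightarrow> real \<Rightarrow> real"
  assumes Gc: "continuous_on ({0..1} \<times> UNIV) (\<lambda>(t,x). G t x)" and u: "isol G s u"
  shows "continuous_on {0..1} (dsol G s u)"
  unfolding continuous_on_eq_continuous_within
  using isol_deriv(2)[OF Gc u] DERIV_continuous by blast

lemma isol_gcont:
  fixes G :: "real \<Rightarrow> real \<Rightarrow> real"
  assumes Gc: "continuous_on ({0..1} \<times> UNIV) (\<lambda>(t,x). G t x)" and u: "isol G s u"
  shows "continuous_on {0..1} (\<lambda>\<tau>. G \<tau> (u \<tau>))"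
  using u unfolding isol_def by (intro Gcomp_cont[OF Gc]) auto

lemma lagrange:
  fixes u du g p dp k :: "real \<Rightarrow> real"
  assumes du: "\<And>t. t \<in> {0..1} \<Longrightarrow> (u has_real_derivative du t) (at t within {0..1})"
    and ddu: "\<And>t. t \<in> {0..1} \<Longrightarrow> (du has_real_derivative - g t) (at t within {0..1})"
    and dp: "\<And>t. t \<in> {0..1} \<Longrightarrow> (p has_real_derivative dp t) (at t within {0..1})"
    and ddp: "\<And>t. t \<in> {0..1} \<Longrightarrow> (dp has_real_derivative - k t) (at t within {0..1})"
    and T: "0 \<le> A" "A \<le> T" "T \<le> 1"
  shows "((\<lambda>t. u t * k t - g t * p t) has_integral
           ((du T * p T - u T * dp T) - (du A * p A - u A * dp A))) {A..T}"
proof (rule fundamental_theorem_of_calculus[OF T(2)])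
  fix t assume t: "t \<in> {A..T}"
  then have t1: "t \<in> {0..1}" using T by auto
  have sub: "{A..T} \<subseteq> {0..1}" using T by auto
  have "((\<lambda>t. du t * p t - u t * dp t) has_real_derivative
        ((- g t) * p t + du t * dp t - (du t * dp t + u t * (- k t)))) (at t within {0..1})"
    using DERIV_diff[OF DERIV_mult'[OF ddu[OF t1] dp[OF t1]] DERIV_mult'[OF du[OF t1] ddp[OF t1]]]
    by (simp add: algebra_simps)
  then have "((\<lambda>t. du t * p t - u t * dp t) has_real_derivative
        ((- g t) * p t + du t * dp t - (du t * dp t + u t * (- k t)))) (at t within {A..T})"
    by (rule deriv_sub[OF _ sub])
  then show "((\<lambda>t. du t * p t - u t * dp t) has_vector_derivative u t * k t - g t * p t) (at t within {A..T})"
    by (simp add: has_real_derivative_iff_has_vector_derivative[symmetric] algebra_simps)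
qed


lemma kernel_bound3:
  fixes h :: "real \<Rightarrow> real"
  assumes h: "continuous_on {0..1} h" and x: "x \<in> {0..1}"
    and hb: "\<And>\<tau>. \<tau> \<in> {0..x} \<Longrightarrow> \<bar>h \<tau>\<bar> \<le> D"
  shows "\<bar>IntK h x\<bar> \<le> D * x\<^sup>2"
proof -
  have c1: "continuous_on {0..1} (\<lambda>\<tau>. (x - \<tau>) * h \<tau>)" by (intro continuous_intros h)
  have D: "0 \<le> D" using hb[of 0] x by auto
  have "\<bar>IntK h x\<bar> \<le> integral {0..x} (\<lambda>\<tau>. x * D)"
    unfolding IntK_def real_norm_def[symmetric]
  proof (rule integral_norm_bound_integral)
    show "(\<lambda>\<tau>. (x - \<tau>) * h \<tau>) integrable_on {0..x}" using int01[OF c1, of 0 x] x by auto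
    show "(\<lambda>\<tau>. x * D) integrable_on {0..x}" by (rule integrable_continuous_real) (rule continuous_on_const)
    fix \<tau> assume t: "\<tau> \<in> {0..x}"
    have "norm ((x - \<tau>) * h \<tau>) = (x - \<tau>) * \<bar>h \<tau>\<bar>" using t by (simp add: abs_mult)
    also have "\<dots> \<le> x * D" using t x hb[OF t] by (intro mult_mono) auto
    finally show "norm ((x - \<tau>) * h \<tau>) \<le> x * D" .
  qed
  also have "\<dots> = D * x\<^sup>2" using x by (simp add: power2_eq_square)
  finally show ?thesis .
qed

lemma closure01_ge:
  fixes h :: "real \<Rightarrow> real"
  assumes "continuous_on {0..1} h" "\<And>t. t \<in> {0<..<1} \<Longrightarrow> a \<le> h t" "x \<in> {0..1}"
  shows "a \<le> h x"
  by (rule continuous_ge_on_closure[of "{0<..<1}"]) (use assms in auto)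

lemma closure01_le:
  fixes h :: "real \<Rightarrow> real"
  assumes "continuous_on {0..1} h" "\<And>t. t \<in> {0<..<1} \<Longrightarrow> h t \<le> a" "x \<in> {0..1}"
  shows "h x \<le> a"
  by (rule continuous_le_on_closure[of "{0<..<1}"]) (use assms in auto)

lemma at01: "t \<in> {0<..<1} \<Longrightarrow> at t within {0..1} = at (t::real)"
  by (intro at_within_Icc_at) auto

locale weight =
  fixes m :: "real \<Rightarrow> real"
  assumes mc: "continuous_on {0..1} m"
    and m0: "\<And>t. t \<in> {0..1} \<Longrightarrow> 0 \<le> m t"
    and mpos: "\<exists>t\<in>{0..1}. 0 < m t"
begin

definition GE :: "real \<Rightarrow> real \<Rightarrow> real \<Rightarrow> real" where "GE \<mu> t x = \<mu> * m t * x"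

definition Mm where "Mm = Sup (m ` {0..1}) + 1"

lemma Mm: "t \<in> {0..1} \<Longrightarrow> m t \<le> Mm" "0 < Mm"
proof -
  have "compact (m ` {0..1})" by (intro compact_continuous_image mc) auto
  then have fin: "bdd_above (m ` {0..1})" by (intro bounded_imp_bdd_above compact_imp_bounded)
  have up: "m t \<le> Sup (m ` {0..1})" if "t \<in> {0..1}" for t
    using cSup_upper[OF _ fin] that by auto
  show "t \<in> {0..1} \<Longrightarrow> m t \<le> Mm" unfolding Mm_def using up[of t] by simp
  show "0 < Mm" unfolding Mm_def using up[of 0] m0[of 0] by simp
qed

end


context weight begin

lemma GE_cont: "continuous_on ({0..1} \<times> UNIV) (\<lambda>(t,x). GE \<mu> t x)"
proof -
  have "continuous_on ({0..1} \<times> UNIV) (\<lambda>p. \<mu> * m (fst p) * snd p)"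
    by (intro continuous_intros continuous_on_compose2[OF mc]) auto
  then show ?thesis unfolding GE_def by (simp add: case_prod_beta)
qed

lemma GE_lip: "t \<in> {0..1} \<Longrightarrow> \<bar>GE \<mu> t x - GE \<mu> t y\<bar> \<le> (\<bar>\<mu>\<bar> * Mm) * \<bar>x - y\<bar>"
proof -
  assume t: "t \<in> {0..1}"
  have "\<bar>GE \<mu> t x - GE \<mu> t y\<bar> = \<bar>\<mu>\<bar> * m t * \<bar>x - y\<bar>"
    unfolding GE_def using m0[OF t] by (simp add: abs_mult right_diff_distrib[symmetric])
  also have "\<dots> \<le> \<bar>\<mu>\<bar> * Mm * \<bar>x - y\<bar>" using Mm(1)[OF t] by (intro mult_right_mono mult_left_mono) auto
  finally show ?thesis by simp
qed

definition v :: "real \<Rightarrow> real \<Rightarrow> real" where "v \<mu> = (SOME u. isol (GE \<mu>) 1 u)"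
definition dv :: "real \<Rightarrow> real \<Rightarrow> real" where "dv \<mu> = dsol (GE \<mu>) 1 (v \<mu>)"

lemma v_isol: "isol (GE \<mu>) 1 (v \<mu>)"
proof -
  have "\<exists>u. isol (GE \<mu>) 1 u"
    using ode_exists[OF GE_cont GE_lip, of \<mu> 1] Mm(2) unfolding isol_def by auto
  then show ?thesis unfolding v_def by (rule someI_ex)
qed

lemma v_cont: "continuous_on {0..1} (v \<mu>)" using v_isol unfolding isol_def by auto
lemma v_0: "v \<mu> 0 = 0" using isol_0[OF v_isol] .
lemma v_eq: "t \<in> {0..1} \<Longrightarrow> v \<mu> t = t - IntK (\<lambda>\<tau>. \<mu> * m \<tau> * v \<mu> \<tau>) t"
  using v_isol unfolding isol_def GE_def by auto

lemma v_deriv: "t \<in> {0..1} \<Longrightarrow> (v \<mu> has_real_derivative dv \<mu> t) (at t within {0..1})"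
  and dv_deriv: "t \<in> {0..1} \<Longrightarrow> (dv \<mu> has_real_derivative - (\<mu> * m t * v \<mu> t)) (at t within {0..1})"
  using isol_deriv[OF GE_cont v_isol] unfolding dv_def GE_def by auto

lemma dv_cont: "continuous_on {0..1} (dv \<mu>)"
  using isol_dcont[OF GE_cont v_isol] unfolding dv_def by auto

lemma isol_id: "isol (\<lambda>t x. 0) 1 (\<lambda>t. t)"
  unfolding isol_def IntK_def by (auto intro: continuous_intros)

definition Bv :: "real \<Rightarrow> real" where "Bv \<Lambda> = 1 + exp (\<Lambda> * Mm + 1) * (2 * (\<Lambda> * Mm))"
definition Kv :: "real \<Rightarrow> real" where "Kv \<Lambda> = exp (\<Lambda> * Mm + 1) * 2 * Mm * Bv \<Lambda>"

lemma v_bound: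
  assumes "\<bar>\<mu>\<bar> \<le> \<Lambda>" "t \<in> {0..1}"
  shows "\<bar>v \<mu> t\<bar> \<le> Bv \<Lambda>"
proof -
  have c0: "continuous_on ({0..1} \<times> UNIV) (\<lambda>(t::real, x::real). 0::real)" by (simp add: continuous_on_const)
  have "\<bar>v \<mu> t - t\<bar> \<le> exp (\<bar>\<mu>\<bar> * Mm + 1) * (2 * (\<bar>1 - 1\<bar> + \<Lambda> * Mm))"
  proof (rule ode_stab[OF GE_cont c0 GE_lip _ v_cont _ _ _ _ assms(2)])
    show "0 \<le> \<bar>\<mu>\<bar> * Mm" using Mm(2) by simp
    show "continuous_on {0..1} (\<lambda>t::real. t)" by (rule continuous_on_id)
    show "\<And>t. t \<in> {0..1} \<Longrightarrow> v \<mu> t = 1 * t - IntK (\<lambda>\<tau>. GE \<mu> \<tau> (v \<mu> \<tau>)) t"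
      using v_isol unfolding isol_def by auto
    show "\<And>t. t \<in> {0..1} \<Longrightarrow> t = 1 * t - IntK (\<lambda>\<tau>. 0) t" unfolding IntK_def by simp
    fix t :: real assume t: "t \<in> {0..1}"
    have "\<bar>GE \<mu> t t - 0\<bar> = \<bar>\<mu>\<bar> * m t * t" unfolding GE_def using t m0[OF t] by (simp add: abs_mult)
    also have "\<dots> \<le> \<Lambda> * Mm * 1" using t m0[OF t] Mm(1)[OF t] assms(1)
      by (intro mult_mono) auto
    finally show "\<bar>GE \<mu> t t - 0\<bar> \<le> \<Lambda> * Mm" by simp
  qed
  also have "\<dots> \<le> exp (\<Lambda> * Mm + 1) * (2 * (\<Lambda> * Mm))"
  proof -
    have e: "exp (\<bar>\<mu>\<bar> * Mm + 1) \<le> exp (\<Lambda> * Mm + 1)" using assms(1) Mm(2) by (simp add: mult_right_mono)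
    have "0 \<le> 2 * (\<Lambda> * Mm)" using assms(1) Mm(2) by simp
    from mult_right_mono[OF e this] show ?thesis by simp
  qed
  finally show ?thesis using assms(2) unfolding Bv_def by auto
qed

lemma Bv_pos: "0 \<le> \<Lambda> \<Longrightarrow> 1 \<le> Bv \<Lambda>"
  unfolding Bv_def using Mm(2) by simp

lemma v_lip:
  assumes "\<bar>\<mu>1\<bar> \<le> \<Lambda>" "\<bar>\<mu>2\<bar> \<le> \<Lambda>" "t \<in> {0..1}"
  shows "\<bar>v \<mu>1 t - v \<mu>2 t\<bar> \<le> Kv \<Lambda> * \<bar>\<mu>1 - \<mu>2\<bar>"
proof -
  have "\<bar>v \<mu>1 t - v \<mu>2 t\<bar> \<le> exp (\<bar>\<mu>1\<bar> * Mm + 1) * (2 * (\<bar>1 - 1\<bar> + \<bar>\<mu>1 - \<mu>2\<bar> * Mm * Bv \<Lambda>))"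
  proof (rule ode_stab[OF GE_cont GE_cont GE_lip _ v_cont v_cont _ _ _ assms(3)])
    show "0 \<le> \<bar>\<mu>1\<bar> * Mm" using Mm(2) by simp
    show "\<And>t. t \<in> {0..1} \<Longrightarrow> v \<mu>1 t = 1 * t - IntK (\<lambda>\<tau>. GE \<mu>1 \<tau> (v \<mu>1 \<tau>)) t"
      using v_isol unfolding isol_def by auto
    show "\<And>t. t \<in> {0..1} \<Longrightarrow> v \<mu>2 t = 1 * t - IntK (\<lambda>\<tau>. GE \<mu>2 \<tau> (v \<mu>2 \<tau>)) t"
      using v_isol unfolding isol_def by auto
    fix t :: real assume t: "t \<in> {0..1}"
    have "\<bar>GE \<mu>1 t (v \<mu>2 t) - GE \<mu>2 t (v \<mu>2 t)\<bar> = \<bar>\<mu>1 - \<mu>2\<bar> * m t * \<bar>v \<mu>2 t\<bar>"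
      unfolding GE_def using t m0[OF t] by (simp add: abs_mult left_diff_distrib[symmetric])
    also have "\<dots> \<le> \<bar>\<mu>1 - \<mu>2\<bar> * Mm * Bv \<Lambda>" using t m0[OF t] Mm(1)[OF t] v_bound[OF assms(2) t]
      by (intro mult_mono) auto
    finally show "\<bar>GE \<mu>1 t (v \<mu>2 t) - GE \<mu>2 t (v \<mu>2 t)\<bar> \<le> \<bar>\<mu>1 - \<mu>2\<bar> * Mm * Bv \<Lambda>" .
  qed
  also have "\<dots> \<le> exp (\<Lambda> * Mm + 1) * (2 * (\<bar>\<mu>1 - \<mu>2\<bar> * Mm * Bv \<Lambda>))"
  proof -
    have e: "exp (\<bar>\<mu>1\<bar> * Mm + 1) \<le> exp (\<Lambda> * Mm + 1)" using assms(1) Mm(2) by (simp add: mult_right_mono)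
    have "0 \<le> Bv \<Lambda>" using Bv_pos[of \<Lambda>] assms(1) by linarith
    then have "0 \<le> 2 * (\<bar>\<mu>1 - \<mu>2\<bar> * Mm * Bv \<Lambda>)" using Mm(2) by simp
    from mult_right_mono[OF e this] show ?thesis by simp
  qed
  finally show ?thesis unfolding Kv_def by (simp add: algebra_simps)
qed

definition a0 :: "real \<Rightarrow> real" where "a0 \<Lambda> = 1 / (2 * (\<Lambda> * Mm * Bv \<Lambda>) + 2)"

lemma a0_pos: "0 \<le> \<Lambda> \<Longrightarrow> 0 < a0 \<Lambda> \<and> a0 \<Lambda> \<le> 1/2"
proof -
  assume L: "0 \<le> \<Lambda>"
  have "0 \<le> \<Lambda> * Mm * Bv \<Lambda>" using L Mm(2) Bv_pos[OF L] by simp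
  then show ?thesis unfolding a0_def by (simp add: field_simps)
qed

lemma v_pos0:
  assumes "\<bar>\<mu>\<bar> \<le> \<Lambda>" "0 < t" "t \<le> a0 \<Lambda>"
  shows "0 < v \<mu> t"
proof -
  have L: "0 \<le> \<Lambda>" using assms(1) by linarith
  define Q where "Q = \<Lambda> * Mm * Bv \<Lambda>"
  have Q0: "0 \<le> Q" unfolding Q_def using L Mm(2) Bv_pos[OF L] by simp
  have t1: "t \<in> {0..1}" using a0_pos[OF L] assms by auto
  have gc: "continuous_on {0..1} (\<lambda>\<tau>. \<mu> * m \<tau> * v \<mu> \<tau>)" by (intro continuous_intros mc v_cont)
  have "\<bar>IntK (\<lambda>\<tau>. \<mu> * m \<tau> * v \<mu> \<tau>) t\<bar> \<le> Q * t\<^sup>2"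
  proof (rule kernel_bound3[OF gc t1])
    fix \<tau> assume "\<tau> \<in> {0..t}"
    then have tt: "\<tau> \<in> {0..1}" using t1 by auto
    have "\<bar>\<mu> * m \<tau> * v \<mu> \<tau>\<bar> = \<bar>\<mu>\<bar> * m \<tau> * \<bar>v \<mu> \<tau>\<bar>" using m0[OF tt] by (simp add: abs_mult)
    also have "\<dots> \<le> \<Lambda> * Mm * Bv \<Lambda>" using assms(1) m0[OF tt] Mm(1)[OF tt] v_bound[OF assms(1) tt]
      by (intro mult_mono) auto
    finally show "\<bar>\<mu> * m \<tau> * v \<mu> \<tau>\<bar> \<le> Q" unfolding Q_def .
  qed
  then have "v \<mu> t \<ge> t - Q * t\<^sup>2" using v_eq[OF t1, where \<mu>=\<mu>] by linarith
  moreover have "Q * t < 1"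
  proof -
    have "Q * t \<le> Q * a0 \<Lambda>" using Q0 assms by (intro mult_left_mono) auto
    also have "\<dots> < 1" unfolding a0_def Q_def[symmetric] using Q0 by (simp add: field_simps)
    finally show ?thesis .
  qed
  then have "t - Q * t\<^sup>2 > 0" using assms(2)
    by (simp add: power2_eq_square)
  ultimately show ?thesis by linarith
qed

end


lemma first_zero:
  fixes f :: "real \<Rightarrow> real"
  assumes fc: "continuous_on {0..1} f" and A: "0 < A" and pos: "\<And>t. 0 < t \<Longrightarrow> t \<le> A \<Longrightarrow> 0 < f t"
    and tau: "0 < \<tau>" "\<tau> \<le> 1" "f \<tau> \<le> 0"
  shows "\<exists>\<tau>1. A < \<tau>1 \<and> \<tau>1 \<le> \<tau> \<and> f \<tau>1 = 0 \<and> (\<forall>t. 0 < t \<and> t < \<tau>1 \<longrightarrow> 0 < f t)"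
proof -
  have At: "A < \<tau>" using pos[of \<tau>] tau by force
  define K where "K = {t \<in> {A..\<tau>}. f t \<le> 0}"
  have fcA: "continuous_on {A..\<tau>} f" using fc by (rule continuous_on_subset) (use A tau in auto)
  have cl: "closed K" unfolding K_def
    using continuous_on_closed_Collect_le[OF fcA continuous_on_const, of 0] by simp
  have ne: "K \<noteq> {}" "\<tau> \<in> K" using tau At unfolding K_def by auto
  have bb: "bdd_below K" unfolding K_def by (rule bdd_belowI[of _ A]) auto
  define \<tau>1 where "\<tau>1 = Inf K"
  have t1K: "\<tau>1 \<in> K" unfolding \<tau>1_def by (rule closed_contains_Inf[OF ne(1) bb cl])
  have low: "t \<in> K \<Longrightarrow> \<tau>1 \<le> t" for t unfolding \<tau>1_def by (rule cInf_lower[OF _ bb])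
  have t1: "A \<le> \<tau>1" "\<tau>1 \<le> \<tau>" "f \<tau>1 \<le> 0" using t1K low[OF ne(2)] unfolding K_def by auto
  have At1: "A < \<tau>1" using t1 pos[of A] A by (cases "A = \<tau>1") auto
  have f0: "f \<tau>1 = 0"
  proof (rule ccontr)
    assume "f \<tau>1 \<noteq> 0"
    then have "f \<tau>1 < 0" using t1 by auto
    moreover have "f A > 0" using pos[of A] A by auto
    moreover have "continuous_on {A..\<tau>1} f" using fc by (rule continuous_on_subset) (use A t1 tau in auto)
    ultimately obtain x where x: "A \<le> x" "x \<le> \<tau>1" "f x = 0" using IVT2'[of f \<tau>1 0 A] At1 by force
    then have "x \<in> K" unfolding K_def using t1 by auto
    then have "\<tau>1 \<le> x" by (rule low)
    then show False using x \<open>f \<tau>1 < 0\<close> by auto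
  qed
  have "0 < f t" if "0 < t" "t < \<tau>1" for t
  proof (cases "t \<le> A")
    case True then show ?thesis using pos that by auto
  next
    case False
    show ?thesis
    proof (rule ccontr)
      assume "\<not> 0 < f t"
      then have "t \<in> K" unfolding K_def using False that t1 by auto
      then show False using low that by force
    qed
  qed
  then show ?thesis using At1 t1 f0 by blast
qed

context weight begin

lemma exists_zero: "\<exists>\<Lambda>>0. \<exists>\<tau>. 0 < \<tau> \<and> \<tau> \<le> 1 \<and> v \<Lambda> \<tau> \<le> 0"
proof (rule ccontr)
  assume H: "\<not> ?thesis"
  then have Hp: "\<And>\<Lambda> \<tau>. 0 < \<Lambda> \<Longrightarrow> 0 < \<tau> \<Longrightarrow> \<tau> \<le> 1 \<Longrightarrow> 0 < v \<Lambda> \<tau>" by force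
  obtain t0 where t0: "t0 \<in> {0..1}" "0 < m t0" using mpos by auto
  define m1 where "m1 = m t0 / 2"
  have m1: "0 < m1" unfolding m1_def using t0 by simp
  obtain \<epsilon> where e: "\<epsilon> > 0" "\<And>t. t \<in> {0..1} \<Longrightarrow> dist t t0 < \<epsilon> \<Longrightarrow> dist (m t) (m t0) < m1"
    using mc t0(1) m1 unfolding continuous_on_iff by metis
  define a where "a = max 0 (t0 - \<epsilon>/2)"
  define b where "b = min 1 (t0 + \<epsilon>/2)"
  have ab: "0 \<le> a" "a < b" "b \<le> 1" "0 < b" unfolding a_def b_def using t0 e by auto
  have mab: "m1 < m t" if "t \<in> {a..b}" for t
  proof -
    have "t \<in> {0..1}" "dist t t0 < \<epsilon>" using that ab e(1) unfolding a_def b_def dist_real_def by auto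
    from e(2)[OF this] have "\<bar>m t - m t0\<bar> < m t0 / 2" unfolding dist_real_def m1_def .
    then show ?thesis unfolding m1_def by linarith
  qed
  define \<kappa> where "\<kappa> = pi / (b - a)"
  have k0: "0 < \<kappa>" unfolding \<kappa>_def using ab by simp
  define \<Lambda> where "\<Lambda> = 2 * \<kappa>\<^sup>2 / m1 + 1"
  have L0: "0 < \<Lambda>" unfolding \<Lambda>_def using m1 by (simp add: add_nonneg_pos)
  have Lm: "\<kappa>\<^sup>2 < \<Lambda> * m1"
  proof -
    have "\<Lambda> * m1 = 2 * \<kappa>\<^sup>2 + m1" unfolding \<Lambda>_def using m1 by (simp add: field_simps)
    moreover have "0 \<le> \<kappa>\<^sup>2" by simp
    ultimately show ?thesis using m1 by linarith
  qed
  define w where "w t = sin (\<kappa> * (t - a))" for t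
  define dw where "dw t = \<kappa> * cos (\<kappa> * (t - a))" for t
  have wd: "(w has_real_derivative dw t) (at t within {0..1})" for t
    unfolding w_def dw_def by (auto intro!: derivative_eq_intros)
  have dwd: "(dw has_real_derivative - (\<kappa>\<^sup>2 * w t)) (at t within {0..1})" for t
    unfolding w_def dw_def by (auto intro!: derivative_eq_intros simp: power2_eq_square)
  have kb: "\<kappa> * (b - a) = pi" unfolding \<kappa>_def using ab by simp
  have wa: "w a = 0" "dw a = \<kappa>" unfolding w_def dw_def by simp_all
  have wb: "w b = 0" "dw b = - \<kappa>" unfolding w_def dw_def using kb by simp_all
  have vnn: "0 \<le> v \<Lambda> t" if "t \<in> {0..1}" for t
    using Hp[OF L0, of t] that v_0 by (cases "t = 0") (auto simp: less_imp_le)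
  have wnn: "0 \<le> w t" if "t \<in> {a..b}" for t
  proof -
    have "0 \<le> \<kappa> * (t - a)" using that k0 by auto
    moreover have "\<kappa> * (t - a) \<le> pi"
    proof -
      have "\<kappa> * (t - a) \<le> \<kappa> * (b - a)" using that k0 by (intro mult_left_mono) auto
      then show ?thesis using kb by simp
    qed
    ultimately show ?thesis unfolding w_def by (rule sin_ge_zero)
  qed
  define f where "f t = v \<Lambda> t * (\<kappa>\<^sup>2 * w t) - (\<Lambda> * m t * v \<Lambda> t) * w t" for t
  have I: "(f has_integral ((dv \<Lambda> b * w b - v \<Lambda> b * dw b) - (dv \<Lambda> a * w a - v \<Lambda> a * dw a))) {a..b}"
    unfolding f_def
    by (rule lagrange[where du="dv \<Lambda>" and dp=dw]) (use v_deriv dv_deriv wd dwd ab in auto)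
  have "(dv \<Lambda> b * w b - v \<Lambda> b * dw b) - (dv \<Lambda> a * w a - v \<Lambda> a * dw a) = \<kappa> * (v \<Lambda> b + v \<Lambda> a)"
    using wa wb by (simp add: algebra_simps)
  also have "\<dots> \<ge> 0" using k0 vnn[of a] vnn[of b] ab by simp
  finally have Ige: "integral {a..b} f \<ge> 0" using integral_unique[OF I] by simp
  have fc: "continuous_on {a..b} f" unfolding f_def w_def
    by (intro continuous_intros continuous_on_subset[OF v_cont] continuous_on_subset[OF mc]) (use ab in auto)
  have "integral {a..b} (\<lambda>t. - f t) > 0"
  proof (rule integral_pos)
    show "continuous_on {a..b} (\<lambda>t. - f t)" by (intro continuous_intros fc)
    show "a < b" by fact
    fix t assume t: "t \<in> {a..b}"
    then have t1: "t \<in> {0..1}" using ab by auto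
    have "- f t = (\<Lambda> * m t - \<kappa>\<^sup>2) * (v \<Lambda> t * w t)" unfolding f_def by (simp add: algebra_simps)
    moreover have "\<kappa>\<^sup>2 < \<Lambda> * m t" using Lm mab[OF t] L0 by (smt (verit) mult_strict_left_mono)
    ultimately show "0 \<le> - f t" using vnn[OF t1] wnn[OF t] by simp
  next
    define c where "c = (a + b) / 2"
    show "c \<in> {a..b}" unfolding c_def using ab by auto
    have c1: "c \<in> {0..1}" "0 < c" unfolding c_def using ab by auto
    have wc: "w c = 1" unfolding w_def c_def
    proof -
      have "\<kappa> * ((a + b) / 2 - a) = pi / 2" using kb by (simp add: field_simps)
      then show "sin (\<kappa> * ((a + b) / 2 - a)) = 1" by simp
    qed
    have "- f c = (\<Lambda> * m c - \<kappa>\<^sup>2) * (v \<Lambda> c * w c)" unfolding f_def by (simp add: algebra_simps)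
    moreover have "\<kappa>\<^sup>2 < \<Lambda> * m c" using Lm mab[OF \<open>c \<in> {a..b}\<close>] L0 by (smt (verit) mult_strict_left_mono)
    moreover have "0 < v \<Lambda> c" using Hp[OF L0 c1(2)] c1 by auto
    ultimately show "0 < - f c" using wc by simp
  qed
  then have "integral {a..b} f < 0" by simp
  then show False using Ige by simp
qed

end


context weight begin

definition L0 where "L0 = (SOME \<Lambda>. \<Lambda> > 0 \<and> (\<exists>\<tau>. 0 < \<tau> \<and> \<tau> \<le> 1 \<and> v \<Lambda> \<tau> \<le> 0))"

lemma L0: "L0 > 0" "\<exists>\<tau>. 0 < \<tau> \<and> \<tau> \<le> 1 \<and> v L0 \<tau> \<le> 0"
  using someI_ex[OF exists_zero] unfolding L0_def by auto

definition Z where "Z = {\<mu>. 0 \<le> \<mu> \<and> \<mu> \<le> L0 \<and> (\<exists>\<tau>. 0 < \<tau> \<and> \<tau> \<le> 1 \<and> v \<mu> \<tau> \<le> 0)}"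

lemma Z_ne: "L0 \<in> Z" using L0 unfolding Z_def by auto
lemma Z_bdd: "bdd_below Z" unfolding Z_def by (rule bdd_belowI[of _ 0]) auto

definition lam1 where "lam1 = Inf Z"

lemma lam1_range: "0 \<le> lam1" "lam1 \<le> L0"
proof -
  show "0 \<le> lam1" unfolding lam1_def using Z_ne by (intro cInf_greatest) (auto simp: Z_def)
  show "lam1 \<le> L0" unfolding lam1_def by (rule cInf_lower[OF Z_ne Z_bdd])
qed

lemma Kv_nn: "0 \<le> \<Lambda> \<Longrightarrow> 0 \<le> Kv \<Lambda>"
  unfolding Kv_def using Mm(2) Bv_pos[of \<Lambda>] by simp

lemma v_zero_id: "t \<in> {0..1} \<Longrightarrow> v 0 t = t"
  using v_eq[of t 0] unfolding IntK_def by simp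

lemma lam1_Z: "lam1 \<in> Z"
proof (rule ccontr)
  assume nz: "lam1 \<notin> Z"
  have pos: "0 < v lam1 \<tau>" if "0 < \<tau>" "\<tau> \<le> 1" for \<tau>
  proof (rule ccontr)
    assume "\<not> 0 < v lam1 \<tau>"
    then have "lam1 \<in> Z" unfolding Z_def using lam1_range that by auto
    then show False using nz by simp
  qed
  define A where "A = a0 L0"
  have A: "0 < A" "A \<le> 1/2" unfolding A_def using a0_pos[of L0] L0(1) by auto
  have cA: "continuous_on {A..1} (v lam1)" by (rule continuous_on_subset[OF v_cont]) (use A in auto)
  obtain ts where ts: "ts \<in> {A..1}" "\<And>t. t \<in> {A..1} \<Longrightarrow> v lam1 ts \<le> v lam1 t"
  proof -
    have "\<exists>x\<in>{A..1}. \<forall>y\<in>{A..1}. v lam1 x \<le> v lam1 y"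
      by (rule continuous_attains_inf[OF compact_Icc _ cA]) (use A in simp)
    then show ?thesis using that by blast
  qed
  define \<eta> where "\<eta> = v lam1 ts"
  have eta: "0 < \<eta>" unfolding \<eta>_def
    by (rule pos) (use ts(1) A in auto)
  define K where "K = Kv L0 + 1"
  have K: "0 < K" unfolding K_def using Kv_nn[of L0] L0 by simp
  have "Inf Z < lam1 + \<eta> / K" unfolding lam1_def[symmetric] using eta K by simp
  then have "\<exists>\<mu>\<in>Z. \<mu> < lam1 + \<eta> / K"
    using cInf_less_iff[OF _ Z_bdd] Z_ne by blast
  then obtain \<mu> where mu: "\<mu> \<in> Z" "\<mu> < lam1 + \<eta> / K" by blast
  have mu1: "lam1 \<le> \<mu>" unfolding lam1_def by (rule cInf_lower[OF mu(1) Z_bdd])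
  have mu2: "0 \<le> \<mu>" "\<mu> \<le> L0" using mu(1) unfolding Z_def by auto
  obtain \<tau> where tau: "0 < \<tau>" "\<tau> \<le> 1" "v \<mu> \<tau> \<le> 0" using mu(1) unfolding Z_def by blast
  show False
  proof (cases "\<tau> \<le> A")
    case True
    have "0 < v \<mu> \<tau>" by (rule v_pos0[where \<Lambda>=L0]) (use mu2 tau True in \<open>auto simp: A_def\<close>)
    then show False using tau by simp
  next
    case False
    then have t1: "\<tau> \<in> {A..1}" using tau by auto
    have "\<bar>v \<mu> \<tau> - v lam1 \<tau>\<bar> \<le> Kv L0 * \<bar>\<mu> - lam1\<bar>"
      by (rule v_lip) (use mu2 lam1_range tau in auto)
    also have "\<dots> \<le> Kv L0 * (\<eta> / K)"
      by (rule mult_left_mono) (use mu mu1 Kv_nn[of L0] L0 in auto)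
    also have "\<dots> < \<eta>"
    proof -
      have "Kv L0 < K" unfolding K_def by simp
      then have "Kv L0 * \<eta> < K * \<eta>" using eta by simp
      then have "Kv L0 * \<eta> / K < \<eta>" using K by (simp add: divide_less_eq mult.commute)
      then show ?thesis by simp
    qed
    finally have "v lam1 \<tau> - v \<mu> \<tau> < \<eta>" by linarith
    moreover have "\<eta> \<le> v lam1 \<tau>" unfolding \<eta>_def by (rule ts(2)[OF t1])
    ultimately show False using tau by linarith
  qed
qed

lemma zero_notin_Z: "0 \<notin> Z"
  unfolding Z_def using v_zero_id by fastforce

lemma lam1_pos: "0 < lam1"
  using lam1_Z zero_notin_Z lam1_range(1) by (cases "lam1 = 0") auto

lemma below_pos:
  assumes "\<mu> < lam1" "0 < \<tau>" "\<tau> \<le> 1"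
  shows "0 < v \<mu> \<tau>"
proof (cases "0 \<le> \<mu>")
  case True
  have "\<mu> \<notin> Z"
  proof
    assume "\<mu> \<in> Z"
    then have "lam1 \<le> \<mu>" unfolding lam1_def by (rule cInf_lower[OF _ Z_bdd])
    then show False using assms by simp
  qed
  then show ?thesis using True assms lam1_range unfolding Z_def by force
next
  case False
  show ?thesis
  proof (rule ccontr)
    assume "\<not> 0 < v \<mu> \<tau>"
    then have nt: "v \<mu> \<tau> \<le> 0" by simp
    define A where "A = a0 \<bar>\<mu>\<bar>"
    have A: "0 < A" unfolding A_def using a0_pos[of "\<bar>\<mu>\<bar>"] by auto
    obtain \<tau>1 where t1: "A < \<tau>1" "\<tau>1 \<le> \<tau>" "v \<mu> \<tau>1 = 0" "\<And>t. 0 < t \<and> t < \<tau>1 \<Longrightarrow> 0 < v \<mu> t"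
      using first_zero[OF v_cont A _ assms(2,3) nt] v_pos0[where \<mu>=\<mu> and \<Lambda>="\<bar>\<mu>\<bar>"] unfolding A_def by blast
    have t1': "\<tau>1 \<in> {0..1}" using t1 A assms by auto
    have vnn: "0 \<le> v \<mu> s" if "s \<in> {0..\<tau>1}" for s
      using t1(4)[of s] t1(3) that v_0[of \<mu>] by (cases "s = 0"; cases "s = \<tau>1") (auto simp: less_imp_le)
    have gc: "continuous_on {0..1} (\<lambda>s. (\<tau>1 - s) * (\<mu> * m s * v \<mu> s))"
      by (intro continuous_intros mc v_cont)
    have "IntK (\<lambda>s. \<mu> * m s * v \<mu> s) \<tau>1 \<le> integral {0..\<tau>1} (\<lambda>s. 0)"
      unfolding IntK_def
    proof (rule integral_le)
      show "(\<lambda>s. (\<tau>1 - s) * (\<mu> * m s * v \<mu> s)) integrable_on {0..\<tau>1}" using int01[OF gc, of 0 \<tau>1] t1' by auto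
      show "(\<lambda>s. 0) integrable_on {0..\<tau>1}" by (rule integrable_0)
      fix s assume s: "s \<in> {0..\<tau>1}"
      then have s1: "s \<in> {0..1}" using t1' by auto
      have "0 \<le> (\<tau>1 - s) * (m s * v \<mu> s)" using s m0[OF s1] vnn[OF s] by simp
      moreover have "\<mu> < 0" using False by simp
      ultimately have "\<mu> * ((\<tau>1 - s) * (m s * v \<mu> s)) \<le> 0" by (simp add: mult_nonpos_nonneg)
      then show "(\<tau>1 - s) * (\<mu> * m s * v \<mu> s) \<le> 0" by (simp add: algebra_simps)
    qed
    then have "IntK (\<lambda>s. \<mu> * m s * v \<mu> s) \<tau>1 \<le> 0" by simp
    then have "\<tau>1 \<le> v \<mu> \<tau>1" using v_eq[OF t1', where \<mu>=\<mu>] by linarith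
    then show False using t1 A by simp
  qed
qed

definition phi where "phi = v lam1"
definition dphi where "dphi = dv lam1"

lemma phi_main: "phi 1 = 0 \<and> (\<forall>t. 0 < t \<and> t < 1 \<longrightarrow> 0 < phi t)"
proof -
  obtain \<tau> where tau: "0 < \<tau>" "\<tau> \<le> 1" "phi \<tau> \<le> 0" using lam1_Z unfolding Z_def phi_def by auto
  define A where "A = a0 L0"
  have A: "0 < A" "A \<le> 1/2" unfolding A_def using a0_pos[of L0] L0(1) by auto
  obtain \<tau>1 where t1: "A < \<tau>1" "\<tau>1 \<le> \<tau>" "phi \<tau>1 = 0" "\<And>t. 0 < t \<and> t < \<tau>1 \<Longrightarrow> 0 < phi t"
  proof -
    have "\<And>t. 0 < t \<Longrightarrow> t \<le> A \<Longrightarrow> 0 < v lam1 t"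
      by (rule v_pos0[where \<Lambda>=L0]) (use lam1_range lam1_pos in \<open>auto simp: A_def\<close>)
    from first_zero[OF v_cont A(1) this tau[unfolded phi_def]] show ?thesis using that unfolding phi_def by blast
  qed
  have t1': "\<tau>1 \<in> {0..1}" using t1 A tau by auto
  have pnn: "0 \<le> phi s" if "s \<in> {0..\<tau>1}" for s
    using t1(4)[of s] t1(3) that v_0[of lam1] unfolding phi_def by (cases "s = 0"; cases "s = \<tau>1") (auto simp: less_imp_le)
  have dmono: "dphi y \<le> dphi x" if "0 \<le> x" "x \<le> y" "y \<le> \<tau>1" for x y
  proof (rule mono01[where f=dphi and f'="\<lambda>t. - (lam1 * m t * phi t)" and a=x and b=y])
    show "\<And>t. t \<in> {0..1} \<Longrightarrow> (dphi has_real_derivative - (lam1 * m t * phi t)) (at t within {0..1})"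
      unfolding dphi_def phi_def by (rule dv_deriv)
    fix t assume "t \<in> {x..y}"
    then have "t \<in> {0..\<tau>1}" "t \<in> {0..1}" using that t1' by auto
    then show "- (lam1 * m t * phi t) \<le> 0" using pnn m0 lam1_pos by simp
  qed (use that t1' in auto)
  have "\<tau>1 = 1"
  proof (rule ccontr)
    assume ne: "\<tau>1 \<noteq> 1"
    then have tl: "\<tau>1 < 1" using t1 tau by simp
    show False
    proof (cases "0 \<le> dphi \<tau>1")
      case True
      have "phi (\<tau>1/2) \<le> phi \<tau>1"
      proof (rule mono01'[where f=phi and f'=dphi and a="\<tau>1/2" and b=\<tau>1])
        show "\<And>t. t \<in> {0..1} \<Longrightarrow> (phi has_real_derivative dphi t) (at t within {0..1})"
          unfolding dphi_def phi_def by (rule v_deriv)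
        fix t :: real assume "t \<in> {\<tau>1/2..\<tau>1}"
        then show "0 \<le> dphi t" using dmono[of t \<tau>1] True t1 A by auto
      qed (use t1 A tl in auto)
      moreover have "0 < phi (\<tau>1/2)" using t1(4)[of "\<tau>1/2"] t1 A by auto
      ultimately show False using t1 by simp
    next
      case False
      have "(phi has_real_derivative dphi \<tau>1) (at \<tau>1)"
        using v_deriv[OF t1', of lam1] at01[of \<tau>1] t1 A tl unfolding phi_def dphi_def by auto
      then obtain d where d: "d > 0" "\<And>h. h > 0 \<Longrightarrow> h < d \<Longrightarrow> phi \<tau>1 > phi (\<tau>1 + h)"
        using DERIV_neg_dec_right[where f=phi and x=\<tau>1 and l="dphi \<tau>1"] False by auto
      define hh where "hh = min (d/2) ((1 - \<tau>1)/2)"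
      define \<tau>2 where "\<tau>2 = \<tau>1 + hh"
      have hpos: "0 < hh" "hh < d" unfolding hh_def using d(1) tl by auto
      have "hh \<le> (1 - \<tau>1)/2" unfolding hh_def by (rule min.cobounded2)
      then have hpos3: "2 * hh \<le> 1 - \<tau>1" by (simp add: field_simps)
      have t2a: "0 < \<tau>2" unfolding \<tau>2_def using hpos(1) t1(1) A(1) by linarith
      have t2b: "\<tau>2 \<le> 1" unfolding \<tau>2_def using hpos hpos3 tl by linarith
      have t2c: "phi \<tau>2 < 0" unfolding \<tau>2_def using d(2)[OF hpos(1,2)] t1(3) by simp
      note t2 = t2a t2b t2c
      define \<eta> where "\<eta> = - phi \<tau>2"
      have eta: "0 < \<eta>" unfolding \<eta>_def using t2 by simp
      define K where "K = Kv L0 + 1"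
      have K: "0 < K" unfolding K_def using Kv_nn[of L0] L0 by simp
      define mm where "mm = min (lam1/2) (\<eta> / (2 * K))"
      have mm: "0 < mm" "mm \<le> lam1/2" "mm \<le> \<eta> / (2 * K)" unfolding mm_def
        using lam1_pos eta K by auto
      define \<mu> where "\<mu> = lam1 - mm"
      have "lam1/2 \<le> lam1" using lam1_pos by simp
      then have mu: "0 \<le> \<mu>" "\<mu> < lam1" "\<mu> \<le> L0" "lam1 - \<mu> \<le> \<eta> / (2 * K)"
        unfolding \<mu>_def using mm lam1_range by (auto simp: field_simps)
      have "\<bar>v \<mu> \<tau>2 - phi \<tau>2\<bar> \<le> Kv L0 * \<bar>\<mu> - lam1\<bar>"
        unfolding phi_def by (rule v_lip) (use mu lam1_range t2 in auto)
      also have "\<dots> \<le> K * (\<eta> / (2 * K))" using mu Kv_nn[of L0] L0 unfolding K_def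
        by (intro mult_mono) auto
      also have "\<dots> = \<eta> / 2" using K by simp
      finally have "v \<mu> \<tau>2 < 0" unfolding \<eta>_def using eta \<eta>_def by linarith
      moreover have "0 < v \<mu> \<tau>2" by (rule below_pos[OF mu(2) t2(1,2)])
      ultimately show False by simp
    qed
  qed
  then show ?thesis using t1 by auto
qed

lemma phi_1: "phi 1 = 0" and phi_pos: "0 < t \<Longrightarrow> t < 1 \<Longrightarrow> 0 < phi t"
  using phi_main by auto

lemma phi_nn: "t \<in> {0..1} \<Longrightarrow> 0 \<le> phi t"
  using phi_pos[of t] phi_1 v_0[of lam1] unfolding phi_def by (cases "t = 0"; cases "t = 1") (auto simp: less_imp_le)

lemma phi_0: "phi 0 = 0" unfolding phi_def by (rule v_0)

lemma phi_deriv: "t \<in> {0..1} \<Longrightarrow> (phi has_real_derivative dphi t) (at t within {0..1})"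
  and dphi_deriv: "t \<in> {0..1} \<Longrightarrow> (dphi has_real_derivative - (lam1 * m t * phi t)) (at t within {0..1})"
  unfolding phi_def dphi_def by (fact v_deriv, fact dv_deriv)

lemma phi_cont: "continuous_on {0..1} phi" unfolding phi_def by (rule v_cont)

lemma dphi_1: "dphi 1 \<le> 0"
proof (rule ccontr)
  assume "\<not> dphi 1 \<le> 0"
  then have d1: "0 < dphi 1" by simp
  have dmono: "dphi y \<le> dphi x" if "0 \<le> x" "x \<le> y" "y \<le> 1" for x y
  proof (rule mono01[where f=dphi and f'="\<lambda>t. - (lam1 * m t * phi t)" and a=x and b=y])
    show "\<And>t. t \<in> {0..1} \<Longrightarrow> (dphi has_real_derivative - (lam1 * m t * phi t)) (at t within {0..1})"
      by (rule dphi_deriv)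
    fix t assume "t \<in> {x..y}"
    then have "t \<in> {0..1}" using that by auto
    then show "- (lam1 * m t * phi t) \<le> 0" using phi_nn m0 lam1_pos by simp
  qed (use that in auto)
  have "phi (1/2) \<le> phi 1"
  proof (rule mono01'[where f=phi and f'=dphi and a="1/2" and b=1])
    show "\<And>t. t \<in> {0..1} \<Longrightarrow> (phi has_real_derivative dphi t) (at t within {0..1})" by (rule phi_deriv)
    fix t :: real assume "t \<in> {1/2..1}"
    then show "0 \<le> dphi t" using dmono[of t 1] d1 by auto
  qed auto
  then show False using phi_pos[of "1/2"] phi_1 by simp
qed

end


context weight begin

lemma eig_lam1: "is_dirichlet_eigenvalue m lam1"
  unfolding is_dirichlet_eigenvalue_def
proof (intro exI conjI)
  show "continuous_on {0..1} phi" by (rule phi_cont)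
  show "C2_on_open01 phi dphi (\<lambda>t. - (lam1 * m t * phi t))"
    unfolding C2_on_open01_def
  proof (intro conjI ballI)
    fix t :: real assume t: "t \<in> {0<..<1}"
    then have t1: "t \<in> {0..1}" by auto
    show "(phi has_real_derivative dphi t) (at t)" using phi_deriv[OF t1] at01[OF t] by simp
    show "(dphi has_real_derivative - (lam1 * m t * phi t)) (at t)" using dphi_deriv[OF t1] at01[OF t] by simp
  next
    show "continuous_on {0<..<1} (\<lambda>t. - (lam1 * m t * phi t))"
      by (rule continuous_on_subset[of "{0..1}"]) (auto intro!: continuous_intros mc phi_cont)
  qed
  show "\<exists>t\<in>{0..1}. phi t \<noteq> 0" using phi_pos[of "1/2"] by (intro bexI[of _ "1/2"]) auto
  show "\<forall>t\<in>{0<..<1}. - (- (lam1 * m t * phi t)) = lam1 * m t * phi t" by simp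
  show "phi 0 = 0" by (rule phi_0)
  show "phi 1 = 0" by (rule phi_1)
qed

lemma deriv_const01:
  fixes f f' :: "real \<Rightarrow> real"
  assumes "\<And>t. t \<in> {0<..<1} \<Longrightarrow> (f has_real_derivative 0) (at t)"
  shows "\<exists>c. \<forall>t\<in>{0<..<1}. f t = c"
  by (rule has_field_derivative_zero_constant) (use assms in \<open>auto intro: has_field_derivative_at_within\<close>)

lemma eig_ge:
  assumes E: "is_dirichlet_eigenvalue m \<mu>"
  shows "lam1 \<le> \<mu>"
proof (rule ccontr)
  assume "\<not> lam1 \<le> \<mu>"
  then have mu: "\<mu> < lam1" by simp
  obtain w w' w'' where wc: "continuous_on {0..1} w" and C2: "C2_on_open01 w w' w''"
    and wnz: "\<exists>t\<in>{0..1}. w t \<noteq> 0" and weq: "\<forall>t\<in>{0<..<1}. - w'' t = \<mu> * m t * w t"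
    and w0: "w 0 = 0" and w1: "w 1 = 0"
    using E unfolding is_dirichlet_eigenvalue_def by blast
  have dw: "\<And>t. t \<in> {0<..<1} \<Longrightarrow> (w has_real_derivative w' t) (at t)"
    and ddw: "\<And>t. t \<in> {0<..<1} \<Longrightarrow> (w' has_real_derivative w'' t) (at t)"
    using C2 unfolding C2_on_open01_def by auto
  define V where "V = v \<mu>"
  define dV where "dV = dv \<mu>"
  have Vpos: "\<And>t. 0 < t \<Longrightarrow> t \<le> 1 \<Longrightarrow> 0 < V t" unfolding V_def using below_pos[OF mu] by auto
  have dVd: "(V has_real_derivative dV t) (at t)" if t: "t \<in> {0<..<1}" for t
  proof -
    have "t \<in> {0..1}" using t by auto
    from v_deriv[OF this, of \<mu>] show ?thesis unfolding V_def dV_def at01[OF t] .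
  qed
  have ddVd: "(dV has_real_derivative - (\<mu> * m t * V t)) (at t)" if t: "t \<in> {0<..<1}" for t
  proof -
    have "t \<in> {0..1}" using t by auto
    from dv_deriv[OF this, of \<mu>] show ?thesis unfolding V_def dV_def at01[OF t] .
  qed
  define W where "W t = w' t * V t - w t * dV t" for t
  have "\<exists>c. \<forall>t\<in>{0<..<1}. W t = c"
  proof (rule deriv_const01)
    fix t :: real assume t: "t \<in> {0<..<1}"
    have "(W has_real_derivative (w'' t * V t + dV t * w' t) - (w' t * dV t + (- (\<mu> * m t * V t)) * w t)) (at t)"
      unfolding W_def by (intro DERIV_diff DERIV_mult dw ddw dVd ddVd t)
    moreover have "(w'' t * V t + dV t * w' t) - (w' t * dV t + (- (\<mu> * m t * V t)) * w t) = 0"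
    proof -
      have "- w'' t = \<mu> * m t * w t" using weq t by blast
      then have e: "w'' t = - (\<mu> * m t * w t)" by linarith
      show ?thesis unfolding e by (simp add: algebra_simps)
    qed
    ultimately show "(W has_real_derivative 0) (at t)" by simp
  qed
  then obtain c where Wc: "\<And>t. t \<in> {0<..<1} \<Longrightarrow> W t = c" by blast
  obtain Bw where Bw: "\<And>t. t \<in> {0..1} \<Longrightarrow> \<bar>w t\<bar> \<le> Bw"
  proof -
    have "compact (w ` {0..1})" by (intro compact_continuous_image wc) auto
    then obtain B where "\<forall>x\<in>w ` {0..1}. norm x \<le> B" using compact_imp_bounded bounded_iff by metis
    then have "\<And>t. t \<in> {0..1} \<Longrightarrow> \<bar>w t\<bar> \<le> B" by auto
    then show ?thesis by (rule that)
  qed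
  obtain BdV where BdV: "\<And>t. t \<in> {0..1} \<Longrightarrow> \<bar>dV t\<bar> \<le> BdV"
  proof -
    have "compact (dV ` {0..1})" unfolding dV_def by (intro compact_continuous_image dv_cont) auto
    then obtain B where "\<forall>x\<in>dV ` {0..1}. norm x \<le> B" using compact_imp_bounded bounded_iff by metis
    then have "\<And>t. t \<in> {0..1} \<Longrightarrow> \<bar>dV t\<bar> \<le> B" by auto
    then show ?thesis by (rule that)
  qed
  define Bd where "Bd = \<bar>w' (1/2)\<bar> + \<bar>\<mu>\<bar> * Mm * Bw"
  have w'b: "\<bar>w' t\<bar> \<le> Bd" if t: "t \<in> {0<..<1}" for t
  proof -
    have w2b: "\<bar>w'' s\<bar> \<le> \<bar>\<mu>\<bar> * Mm * Bw" if "s \<in> {0<..<1}" for s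
    proof -
      have s1: "s \<in> {0..1}" using that by auto
      have "- w'' s = \<mu> * m s * w s" using weq that by blast
      then have e: "w'' s = - (\<mu> * m s * w s)" by linarith
      have "\<bar>w'' s\<bar> = \<bar>\<mu>\<bar> * m s * \<bar>w s\<bar>" unfolding e using m0[OF s1] by (simp add: abs_mult)
      also have "\<dots> \<le> \<bar>\<mu>\<bar> * Mm * Bw" using Mm(1)[OF s1] Bw[OF s1] m0[OF s1]
        by (intro mult_mono) auto
      finally show ?thesis .
    qed
    have "\<bar>w' t - w' (1/2)\<bar> \<le> \<bar>\<mu>\<bar> * Mm * Bw"
    proof (cases "t = 1/2")
      case False
      define a where "a = min t (1/2)"
      define b where "b = max t (1/2)"
      have ab: "a < b" "0 < a" "b < 1" unfolding a_def b_def using False t by auto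
      obtain z where z: "a < z" "z < b" "w' b - w' a = (b - a) * w'' z"
        using MVT2[OF ab(1), of w' w''] ddw ab by force
      have "\<bar>w' b - w' a\<bar> = (b - a) * \<bar>w'' z\<bar>" using z ab by (simp add: abs_mult)
      also have "\<dots> \<le> 1 * (\<bar>\<mu>\<bar> * Mm * Bw)" using ab z w2b[of z]
        by (intro mult_mono) auto
      finally have "\<bar>w' b - w' a\<bar> \<le> \<bar>\<mu>\<bar> * Mm * Bw" by simp
      then show ?thesis unfolding a_def b_def by (cases "t \<le> 1/2") (auto simp: abs_minus_commute)
    next
      case True
      have "0 \<le> Bw" using Bw[of 0] by auto
      then have "0 \<le> \<bar>\<mu>\<bar> * Mm * Bw" using Mm(2) by simp
      then show ?thesis by (subst True) simp
    qed
    then show ?thesis unfolding Bd_def by linarith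
  qed
  have c0: "c = 0"
  proof -
    define h where "h t = Bd * \<bar>V t\<bar> + BdV * \<bar>w t\<bar>" for t
    have hc: "continuous_on {0..1} h" unfolding h_def V_def by (intro continuous_intros v_cont wc)
    have "\<bar>c\<bar> \<le> h 0"
    proof (rule closure01_ge[OF hc])
      fix t :: real assume t: "t \<in> {0<..<1}"
      have t1: "t \<in> {0..1}" using t by auto
      have "\<bar>c\<bar> = \<bar>w' t * V t - w t * dV t\<bar>" using Wc[OF t] unfolding W_def by simp
      also have "\<dots> \<le> \<bar>w' t\<bar> * \<bar>V t\<bar> + \<bar>w t\<bar> * \<bar>dV t\<bar>"
        using abs_triangle_ineq4[of "w' t * V t" "w t * dV t"] by (simp add: abs_mult)
      also have "\<dots> \<le> Bd * \<bar>V t\<bar> + \<bar>w t\<bar> * BdV"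
        using w'b[OF t] BdV[OF t1] by (intro add_mono mult_mono) auto
      finally show "\<bar>c\<bar> \<le> h t" unfolding h_def by (simp add: mult.commute)
    qed auto
    moreover have "h 0 = 0" unfolding h_def V_def using v_0 w0 by simp
    ultimately show ?thesis by simp
  qed
  have "\<exists>k. \<forall>t\<in>{0<..<1}. w t / V t = k"
  proof (rule deriv_const01)
    fix t :: real assume t: "t \<in> {0<..<1}"
    have Vne: "V t \<noteq> 0" using Vpos[of t] t by auto
    have "((\<lambda>t. w t / V t) has_real_derivative (w' t * V t - w t * dV t) / (V t * V t)) (at t)"
      by (rule DERIV_divide[OF dw[OF t] dVd[OF t] Vne])
    moreover have "w' t * V t - w t * dV t = 0" using Wc[OF t] c0 unfolding W_def by simp
    ultimately show "((\<lambda>t. w t / V t) has_real_derivative 0) (at t)" by simp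
  qed
  then obtain k where k0: "\<And>t. t \<in> {0<..<1} \<Longrightarrow> w t / V t = k" by blast
  have k: "w t = k * V t" if t: "t \<in> {0<..<1}" for t
  proof -
    have "V t \<noteq> 0" using Vpos[of t] t by auto
    then show ?thesis using k0[OF t] by (simp add: field_simps)
  qed
  have "w 1 - k * V 1 = 0"
  proof -
    have hc: "continuous_on {0..1} (\<lambda>t. w t - k * V t)" unfolding V_def by (intro continuous_intros v_cont wc)
    have "0 \<le> w 1 - k * V 1" by (rule closure01_ge[OF hc]) (use k in auto)
    moreover have "w 1 - k * V 1 \<le> 0" by (rule closure01_le[OF hc]) (use k in auto)
    ultimately show ?thesis by simp
  qed
  then have "k = 0" using w1 Vpos[of 1] by simp
  have "\<forall>t\<in>{0..1}. w t = 0"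
  proof
    fix t :: real assume t: "t \<in> {0..1}"
    show "w t = 0"
    proof (cases "t = 0 \<or> t = 1")
      case True then show ?thesis using w0 w1 by auto
    next
      case False then have "t \<in> {0<..<1}" using t by auto
      then show ?thesis using k \<open>k = 0\<close> by simp
    qed
  qed
  then show False using wnz by blast
qed

lemma lambda1_eq: "lambda1 m = lam1"
  unfolding lambda1_def by (rule cInf_eq_minimum) (use eig_lam1 eig_ge in auto)

end


definition hat :: "nat \<Rightarrow> real \<Rightarrow> real" where "hat k y = max 0 (1 - \<bar>y - real k\<bar>)"

lemma hat_nn: "0 \<le> hat k y" and hat_le1: "hat k y \<le> 1"
  unfolding hat_def by auto

lemma hat_nz: "hat k y \<noteq> 0 \<Longrightarrow> \<bar>y - real k\<bar> < 1"
  unfolding hat_def by (auto simp: max_def split: if_splits)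

lemma hat_lip: "\<bar>hat k y - hat k y'\<bar> \<le> \<bar>y - y'\<bar>"
  unfolding hat_def by (auto simp: max_def abs_if split: if_splits)

lemma hat_cont: "continuous_on S (\<lambda>p. hat k (f p))" if "continuous_on S f"
  unfolding hat_def by (intro continuous_intros that)

lemma hat_aff:
  fixes y a b :: real and M :: nat
  assumes y: "0 \<le> y" "y \<le> real M"
  shows "(\<Sum>k=0..M. hat k y * (a + b * real k)) = a + b * y"
proof -
  define j where "j = nat \<lfloor>y\<rfloor>"
  have jy: "real j \<le> y" "y < real j + 1" unfolding j_def using y by linarith+
  have jM: "j \<le> M" using jy y by linarith
  show ?thesis
  proof (cases "j < M")
    case True
    have "(\<Sum>k=0..M. hat k y * (a + b * real k)) = (\<Sum>k\<in>{j, Suc j}. hat k y * (a + b * real k))"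
    proof (rule sum.mono_neutral_right)
      show "{j, Suc j} \<subseteq> {0..M}" using True by auto
      show "\<forall>k\<in>{0..M} - {j, Suc j}. hat k y * (a + b * real k) = 0"
      proof
        fix k assume k: "k \<in> {0..M} - {j, Suc j}"
        have "\<bar>y - real k\<bar> \<ge> 1"
        proof (cases "k < j")
          case True then have "real k + 1 \<le> real j" by linarith
          then show ?thesis using jy by linarith
        next
          case False then have "k \<ge> j + 2" using k by auto
          then have "real j + 2 \<le> real k" by linarith
          then show ?thesis using jy by linarith
        qed
        then have "hat k y = 0" unfolding hat_def by auto
        then show "hat k y * (a + b * real k) = 0" by simp
      qed
    qed auto
    also have "\<dots> = hat j y * (a + b * real j) + hat (Suc j) y * (a + b * real (Suc j))" by simp
    also have "hat j y = 1 - (y - real j)" unfolding hat_def using jy by auto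
    also have "hat (Suc j) y = y - real j" unfolding hat_def using jy by auto
    finally show ?thesis by (simp add: algebra_simps)
  next
    case False
    then have jM': "j = M" using jM by simp
    then have yM: "y = real M" using jy y by linarith
    have "(\<Sum>k=0..M. hat k y * (a + b * real k)) = (\<Sum>k\<in>{M}. hat k y * (a + b * real k))"
    proof (rule sum.mono_neutral_right)
      show "\<forall>k\<in>{0..M} - {M}. hat k y * (a + b * real k) = 0"
      proof
        fix k assume k: "k \<in> {0..M} - {M}"
        then have "real k + 1 \<le> real M" by auto
        then have "hat k y = 0" unfolding hat_def using yM by auto
        then show "hat k y * (a + b * real k) = 0" by simp
      qed
    qed auto
    also have "\<dots> = a + b * y" using yM unfolding hat_def by simp
    finally show ?thesis .
  qed
qed

lemma hat_sum1: "0 \<le> y \<Longrightarrow> y \<le> real M \<Longrightarrow> (\<Sum>k=0..M. hat k y) = 1"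
  using hat_aff[of y M 1 0] by simp

lemma hat_sumk: "0 \<le> y \<Longrightarrow> y \<le> real M \<Longrightarrow> (\<Sum>k=0..M. hat k y * real k) = y"
  using hat_aff[of y M 0 1] by simp

lemma hat_mono:
  assumes "\<And>k. k \<le> M \<Longrightarrow> hat k y \<noteq> 0 \<Longrightarrow> f k \<le> g k"
  shows "(\<Sum>k=0..M. hat k y * f k) \<le> (\<Sum>k=0..M. hat k y * g k)"
proof (rule sum_mono)
  fix k assume k: "k \<in> {0..M}"
  show "hat k y * f k \<le> hat k y * g k"
  proof (cases "hat k y = 0")
    case False then show ?thesis using assms[of k] k hat_nn[of k y] by (intro mult_left_mono) auto
  qed simp
qed


lemma int01c: "continuous_on {0..1} f \<Longrightarrow> 0 \<le> T \<Longrightarrow> T \<le> 1 \<Longrightarrow> (f::real\<Rightarrow>real) integrable_on {0..T}"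
  by (rule int01) auto

context weight begin

lemma m_inner: "\<exists>c. 0 < c \<and> c < 1 \<and> 0 < m c"
proof -
  obtain t0 where t0: "t0 \<in> {0..1}" "0 < m t0" using mpos by auto
  obtain e where e: "e > 0" "\<And>t. t \<in> {0..1} \<Longrightarrow> dist t t0 < e \<Longrightarrow> dist (m t) (m t0) < m t0"
    using mc t0 unfolding continuous_on_iff by metis
  define c where "c = (if t0 = 0 then min (e/2) (1/2) else if t0 = 1 then max (1 - e/2) (1/2) else t0)"
  have c: "0 < c" "c < 1" "dist c t0 < e" unfolding c_def using t0 e(1) by (auto simp: dist_real_def)
  then have "dist (m c) (m t0) < m t0" using e(2)[of c] by auto
  then have "0 < m c" unfolding dist_real_def by linarith
  then show ?thesis using c by auto
qed

definition Jw where "Jw = integral {0..1} (\<lambda>t. m t * (t * (1 - t)) * phi t)"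
definition Jp where "Jp = integral {0..1} (\<lambda>t. m t * phi t)"

lemma Jw_pos: "0 < Jw"
proof -
  obtain c where c: "0 < c" "c < 1" "0 < m c" using m_inner by auto
  show ?thesis unfolding Jw_def
  proof (rule integral_pos[where c=c])
    show "continuous_on {0..1} (\<lambda>t. m t * (t * (1 - t)) * phi t)" by (intro continuous_intros mc phi_cont)
    show "\<And>x. x \<in> {0..1} \<Longrightarrow> 0 \<le> m x * (x * (1 - x)) * phi x" using m0 phi_nn by simp
    show "0 < m c * (c * (1 - c)) * phi c" using c phi_pos[of c] by simp
  qed (use c in auto)
qed

lemma Jp_nn: "0 \<le> Jp"
  unfolding Jp_def
proof (rule integral_nonneg)
  show "(\<lambda>t. m t * phi t) integrable_on {0..1}" by (auto intro!: int01c continuous_intros mc phi_cont)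
  fix x :: real assume "x \<in> {0..1}"
  then show "0 \<le> m x * phi x" using m0 phi_nn by simp
qed

definition Mst :: "real \<Rightarrow> real \<Rightarrow> real \<Rightarrow> real" where
  "Mst c lam R1 = c * lam * R1 * Jp / ((c * lam - lam1) * Jw)"

lemma Mst_nn: "0 \<le> c \<Longrightarrow> 0 \<le> lam \<Longrightarrow> 0 \<le> R1 \<Longrightarrow> lam1 < c * lam \<Longrightarrow> 0 \<le> Mst c lam R1"
  unfolding Mst_def using Jp_nn Jw_pos by simp

end

locale shoot = weight +
  fixes G :: "real \<Rightarrow> real \<Rightarrow> real" and Lg lam c \<delta>2 R1 Gmax :: real
  assumes Gc: "continuous_on ({0..1} \<times> UNIV) (\<lambda>(t,x). G t x)"
    and GL: "\<And>t x y. t \<in> {0..1} \<Longrightarrow> \<bar>G t x - G t y\<bar> \<le> Lg * \<bar>x - y\<bar>" and Lg: "0 \<le> Lg"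
    and Gnn: "\<And>t x. t \<in> {0..1} \<Longrightarrow> 0 \<le> G t x"
    and Gup: "\<And>t x. t \<in> {0..1} \<Longrightarrow> 0 \<le> x \<Longrightarrow> x \<le> \<delta>2 \<Longrightarrow> G t x \<le> lam * m t * x"
    and Glow: "\<And>t x. t \<in> {0..1} \<Longrightarrow> 0 \<le> x \<Longrightarrow> c * lam * m t * x - c * lam * m t * R1 \<le> G t x"
    and Gb: "\<And>t x. t \<in> {0..1} \<Longrightarrow> 0 \<le> x \<Longrightarrow> x \<le> Mst c lam R1 \<Longrightarrow> G t x \<le> Gmax"
    and lam: "0 < lam" "lam < lam1" "lam1 < c * lam" "0 < c"
    and d2: "0 < \<delta>2" and R1: "0 \<le> R1"
begin

definition U where "U s = (SOME u. isol G s u)"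
definition dU where "dU s = dsol G s (U s)"

lemma U_isol: "isol G s (U s)"
proof -
  have "\<exists>u. isol G s u" using ode_exists[OF Gc GL Lg] unfolding isol_def by auto
  then show ?thesis unfolding U_def by (rule someI_ex)
qed

lemma U_cont: "continuous_on {0..1} (U s)" using U_isol unfolding isol_def by auto
lemma U_0: "U s 0 = 0" by (rule isol_0[OF U_isol])
lemma U_eq: "t \<in> {0..1} \<Longrightarrow> U s t = s * t - IntK (\<lambda>\<tau>. G \<tau> (U s \<tau>)) t"
  using U_isol unfolding isol_def by auto
lemma U_deriv: "t \<in> {0..1} \<Longrightarrow> (U s has_real_derivative dU s t) (at t within {0..1})"
  using isol_deriv(1)[OF Gc U_isol] unfolding dU_def .
lemma dU_deriv: "t \<in> {0..1} \<Longrightarrow> (dU s has_real_derivative - G t (U s t)) (at t within {0..1})"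
  using isol_deriv(2)[OF Gc U_isol] unfolding dU_def .
lemma gU_cont: "continuous_on {0..1} (\<lambda>\<tau>. G \<tau> (U s \<tau>))" by (rule isol_gcont[OF Gc U_isol])

lemma U_lip: "t \<in> {0..1} \<Longrightarrow> \<bar>U s1 t - U s2 t\<bar> \<le> exp (Lg + 1) * (2 * \<bar>s1 - s2\<bar>)"
proof -
  assume t: "t \<in> {0..1}"
  have "\<bar>U s1 t - U s2 t\<bar> \<le> exp (Lg + 1) * (2 * (\<bar>s1 - s2\<bar> + 0))"
    by (rule ode_stab[OF Gc Gc GL Lg U_cont U_cont]) (use U_eq t in auto)
  then show ?thesis by simp
qed

lemma Phi_cont: "continuous_on UNIV (\<lambda>s. U s 1)"
  unfolding continuous_on_iff
proof (intro ballI allI impI)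
  fix s e :: real assume e: "0 < e"
  define K where "K = exp (Lg + 1) * 2 + 1"
  have K: "0 < K" unfolding K_def by (simp add: add_pos_pos)
  show "\<exists>d>0. \<forall>s'\<in>UNIV. dist s' s < d \<longrightarrow> dist (U s' 1) (U s 1) < e"
  proof (intro exI conjI ballI impI)
    show "0 < e / K" using e K by simp
    fix s' assume "dist s' s < e / K"
    then have d: "\<bar>s' - s\<bar> < e / K" by (simp add: dist_real_def)
    have "\<bar>U s' 1 - U s 1\<bar> \<le> exp (Lg + 1) * (2 * \<bar>s' - s\<bar>)" by (rule U_lip) simp
    also have "\<dots> \<le> K * \<bar>s' - s\<bar>" unfolding K_def by (simp add: algebra_simps)
    also have "\<dots> < K * (e / K)" using d K by (intro mult_strict_left_mono) auto
    also have "\<dots> = e" using K by simp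
    finally show "dist (U s' 1) (U s 1) < e" by (simp add: dist_real_def)
  qed
qed

lemma dU_mono: "0 \<le> x \<Longrightarrow> x \<le> y \<Longrightarrow> y \<le> 1 \<Longrightarrow> dU s y \<le> dU s x"
  by (rule mono01[where f="dU s" and f'="\<lambda>t. - G t (U s t)" and a=x and b=y])
    (use dU_deriv Gnn in auto)

lemma U_concave: "0 \<le> a \<Longrightarrow> a < x \<Longrightarrow> x < b \<Longrightarrow> b \<le> 1 \<Longrightarrow>
    (b - x) * U s a + (x - a) * U s b \<le> (b - a) * U s x"
  by (rule concave01[where f="U s" and f'="dU s"]) (use U_deriv dU_mono in auto)

lemma U_pos0:
  assumes s: "0 < s"
  shows "\<exists>a>0. a \<le> 1 \<and> (\<forall>t. 0 < t \<and> t \<le> a \<longrightarrow> 0 < U s t)"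
proof -
  have "compact ((\<lambda>\<tau>. G \<tau> (U s \<tau>)) ` {0..1})" by (intro compact_continuous_image gU_cont) auto
  then obtain B where B: "\<And>\<tau>. \<tau> \<in> {0..1} \<Longrightarrow> \<bar>G \<tau> (U s \<tau>)\<bar> \<le> B"
    using compact_imp_bounded bounded_iff by (metis image_eqI real_norm_def)
  have B0: "0 \<le> B" using B[of 0] by auto
  define a where "a = min 1 (s / (2 * B + 1))"
  have a: "0 < a" "a \<le> 1" unfolding a_def using s B0 by auto
  have "0 < U s t" if t: "0 < t" "t \<le> a" for t
  proof -
    have t1: "t \<in> {0..1}" using t a by auto
    have "\<bar>IntK (\<lambda>\<tau>. G \<tau> (U s \<tau>)) t\<bar> \<le> B * t\<^sup>2"
      by (rule kernel_bound3[OF gU_cont t1]) (use B t1 in auto)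
    then have "U s t \<ge> s * t - B * t\<^sup>2" using U_eq[OF t1, of s] by linarith
    moreover have "B * t < s"
    proof -
      have "B * t \<le> B * (s / (2 * B + 1))" using t a B0 unfolding a_def by (intro mult_left_mono) auto
      also have "\<dots> < s"
      proof -
        have h: "0 < s + B * s" using s B0 by (simp add: add_pos_nonneg)
        have "B * (s / (2 * B + 1)) < s \<longleftrightarrow> B * s < s * (2 * B + 1)" using B0 by (simp add: field_simps)
        then show ?thesis using h by (simp add: algebra_simps)
      qed
      finally show ?thesis .
    qed
    ultimately show ?thesis using t by (simp add: power2_eq_square)
      (smt (verit, ccfv_SIG) mult.assoc mult_less_cancel_right_disj mult.commute)
  qed
  then show ?thesis using a by blast
qed

lemma ident:
  assumes T: "0 \<le> T" "T \<le> 1"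
  shows "integral {0..T} (\<lambda>t. U s t * (lam1 * m t * phi t) - G t (U s t) * phi t) = dU s T * phi T - U s T * dphi T"
proof -
  have "((\<lambda>t. U s t * (lam1 * m t * phi t) - G t (U s t) * phi t) has_integral
           ((dU s T * phi T - U s T * dphi T) - (dU s 0 * phi 0 - U s 0 * dphi 0))) {0..T}"
    by (rule lagrange[where du="dU s" and dp=dphi]) (use U_deriv dU_deriv phi_deriv dphi_deriv T in auto)
  then show ?thesis using U_0 phi_0 by (simp add: integral_unique)
qed

end


context shoot begin

lemma U_nn:
  assumes "0 \<le> U s 1" "t \<in> {0..1}"
  shows "0 \<le> U s t"
proof (cases "t = 0 \<or> t = 1")
  case True then show ?thesis using assms U_0 by auto
next
  case False
  then have t: "0 < t" "t < 1" using assms by auto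
  have "(1 - t) * U s 0 + (t - 0) * U s 1 \<le> (1 - 0) * U s t" by (rule U_concave) (use t in auto)
  then have "t * U s 1 \<le> U s t" using U_0 by simp
  moreover have "0 \<le> t * U s 1" using t assms by simp
  ultimately show ?thesis by linarith
qed

lemma U_lower:
  assumes U1: "0 \<le> U s 1" and ts: "ts \<in> {0..1}" and mx: "\<And>t. t \<in> {0..1} \<Longrightarrow> U s t \<le> U s ts"
    and t: "t \<in> {0..1}"
  shows "U s ts * (t * (1 - t)) \<le> U s t"
proof -
  define M where "M = U s ts"
  have M0: "0 \<le> M" unfolding M_def by (rule U_nn[OF U1 ts])
  have Ut: "0 \<le> U s t" by (rule U_nn[OF U1 t])
  have tt1: "t * (1 - t) \<le> t * 1" using t by (intro mult_left_mono) auto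
  have tt2: "t * (1 - t) \<le> 1 * (1 - t)" using t by (intro mult_right_mono) auto
  have tt3: "0 \<le> t * (1 - t)" using t by auto
  note tt = tt1[simplified] tt2[simplified] tt3
  consider "t = ts" | "t < ts" | "ts < t" by linarith
  then show ?thesis
  proof cases
    case 1
    have "M * (t * (1 - t)) \<le> M * 1" using M0 tt t by (intro mult_left_mono) auto
    then show ?thesis using 1 unfolding M_def by simp
  next
    case 2
    show ?thesis
    proof (cases "t = 0")
      case True then show ?thesis using U_0 by simp
    next
      case False
      then have "(ts - t) * U s 0 + (t - 0) * U s ts \<le> (ts - 0) * U s t" using 2 t ts by (intro U_concave) auto
      then have "t * M \<le> ts * U s t" using U_0 unfolding M_def by simp
      also have "\<dots> \<le> 1 * U s t" using ts Ut by (intro mult_right_mono) auto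
      finally have "t * M \<le> U s t" by simp
      moreover have "M * (t * (1 - t)) \<le> M * t" using M0 tt by (intro mult_left_mono) auto
      ultimately show ?thesis unfolding M_def by (simp add: mult.commute)
    qed
  next
    case 3
    show ?thesis
    proof (cases "t = 1")
      case True then show ?thesis using U1 by simp
    next
      case False
      then have "(1 - t) * U s ts + (t - ts) * U s 1 \<le> (1 - ts) * U s t" using 3 t ts by (intro U_concave) auto
      moreover have "0 \<le> (t - ts) * U s 1" using 3 U1 by simp
      ultimately have "(1 - t) * M \<le> (1 - ts) * U s t" unfolding M_def by linarith
      also have "\<dots> \<le> 1 * U s t" using ts Ut by (intro mult_right_mono) auto
      finally have "(1 - t) * M \<le> U s t" by simp
      moreover have "M * (t * (1 - t)) \<le> M * (1 - t)" using M0 tt by (intro mult_left_mono) auto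
      ultimately show ?thesis unfolding M_def by (simp add: mult.commute)
    qed
  qed
qed

lemma fc1: "continuous_on {0..1} (\<lambda>t. U s t * (lam1 * m t * phi t) - G t (U s t) * phi t)"
  by (intro continuous_intros U_cont mc phi_cont gU_cont)

lemma U_bound:
  assumes U1: "0 \<le> U s 1"
  shows "\<forall>t\<in>{0..1}. U s t \<le> Mst c lam R1"
proof -
  obtain ts where ts: "ts \<in> {0..1}" "\<And>t. t \<in> {0..1} \<Longrightarrow> U s t \<le> U s ts"
  proof -
    have "\<exists>x\<in>{0..1}. \<forall>y\<in>{0..1}. U s y \<le> U s x"
      by (rule continuous_attains_sup[OF compact_Icc _ U_cont]) simp
    then show ?thesis using that by blast
  qed
  define M where "M = U s ts"
  define I3 where "I3 = integral {0..1} (\<lambda>t. m t * U s t * phi t)"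
  have c3: "continuous_on {0..1} (\<lambda>t. m t * U s t * phi t)" by (intro continuous_intros U_cont mc phi_cont)
  have cw: "continuous_on {0..1} (\<lambda>t. m t * (t * (1 - t)) * phi t)" by (intro continuous_intros mc phi_cont)
  have cp: "continuous_on {0..1} (\<lambda>t. m t * phi t)" by (intro continuous_intros mc phi_cont)
  have "0 \<le> - U s 1 * dphi 1" using U1 dphi_1 by (simp add: mult_nonneg_nonpos)
  also have "\<dots> = integral {0..1} (\<lambda>t. U s t * (lam1 * m t * phi t) - G t (U s t) * phi t)"
    using ident[of 1 s] phi_1 by simp
  also have "\<dots> \<le> integral {0..1} (\<lambda>t. (lam1 - c * lam) * (m t * U s t * phi t) + (c * lam * R1) * (m t * phi t))"
  proof (rule integral_le)
    show "(\<lambda>t. U s t * (lam1 * m t * phi t) - G t (U s t) * phi t) integrable_on {0..1}" by (rule int01c[OF fc1]) auto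
    show "(\<lambda>t. (lam1 - c * lam) * (m t * U s t * phi t) + (c * lam * R1) * (m t * phi t)) integrable_on {0..1}"
      by (rule int01c) (auto intro!: continuous_intros U_cont mc phi_cont)
    fix t :: real assume t: "t \<in> {0..1}"
    have "c * lam * m t * U s t - c * lam * m t * R1 \<le> G t (U s t)" by (rule Glow[OF t U_nn[OF U1 t]])
    then have "(c * lam * m t * U s t - c * lam * m t * R1) * phi t \<le> G t (U s t) * phi t"
      using phi_nn[OF t] by (rule mult_right_mono)
    then show "U s t * (lam1 * m t * phi t) - G t (U s t) * phi t
        \<le> (lam1 - c * lam) * (m t * U s t * phi t) + (c * lam * R1) * (m t * phi t)"
      by (simp add: algebra_simps)
  qed
  also have "\<dots> = (lam1 - c * lam) * I3 + (c * lam * R1) * Jp"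
    unfolding I3_def Jp_def
    by (subst integral_add) (auto intro!: int01c continuous_intros U_cont mc phi_cont)
  finally have A: "(c * lam - lam1) * I3 \<le> (c * lam * R1) * Jp" by (simp add: algebra_simps)
  have B: "M * Jw \<le> I3"
  proof -
    have "M * Jw = integral {0..1} (\<lambda>t. M * (m t * (t * (1 - t)) * phi t))" unfolding Jw_def by simp
    also have "\<dots> \<le> I3" unfolding I3_def
    proof (rule integral_le)
      show "(\<lambda>t. M * (m t * (t * (1 - t)) * phi t)) integrable_on {0..1}"
        by (rule int01c) (auto intro!: continuous_intros mc phi_cont)
      show "(\<lambda>t. m t * U s t * phi t) integrable_on {0..1}" by (rule int01c[OF c3]) auto
      fix t :: real assume t: "t \<in> {0..1}"
      have "M * (t * (1 - t)) \<le> U s t" unfolding M_def by (rule U_lower[OF U1 ts t])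
      then have "(M * (t * (1 - t))) * (m t * phi t) \<le> U s t * (m t * phi t)"
        using m0[OF t] phi_nn[OF t] by (intro mult_right_mono) auto
      then show "M * (m t * (t * (1 - t)) * phi t) \<le> m t * U s t * phi t" by (simp add: algebra_simps)
    qed
    finally show ?thesis .
  qed
  have cl: "0 < c * lam - lam1" using lam by simp
  have "(c * lam - lam1) * (M * Jw) \<le> (c * lam - lam1) * I3" using B cl by (intro mult_left_mono) auto
  then have "(c * lam - lam1) * (M * Jw) \<le> c * lam * R1 * Jp" using A by linarith
  then have "M \<le> c * lam * R1 * Jp / ((c * lam - lam1) * Jw)"
    using cl Jw_pos by (simp add: field_simps)
  then have "M \<le> Mst c lam R1" unfolding Mst_def .
  then show ?thesis using ts(2) unfolding M_def by fastforce
qed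

lemma Gmax_nn: "0 \<le> Gmax"
  using Gnn[of 0 0] Gb[of 0 0] Mst_nn[of c lam R1] lam R1 by auto

lemma s_bound:
  assumes U1: "0 \<le> U s 1"
  shows "s \<le> 2 * Mst c lam R1 + Gmax / 2"
proof -
  have h: "(1/2::real) \<in> {0..1}" by simp
  have "\<bar>IntK (\<lambda>\<tau>. G \<tau> (U s \<tau>)) (1/2)\<bar> \<le> Gmax * (1/2)\<^sup>2"
  proof (rule kernel_bound3[OF gU_cont h])
    fix \<tau> :: real assume "\<tau> \<in> {0..1/2}"
    then have t: "\<tau> \<in> {0..1}" by auto
    show "\<bar>G \<tau> (U s \<tau>)\<bar> \<le> Gmax"
      using Gnn[OF t] Gb[OF t U_nn[OF U1 t]] U_bound[OF U1] t by auto
  qed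
  moreover have "U s (1/2) = s * (1/2) - IntK (\<lambda>\<tau>. G \<tau> (U s \<tau>)) (1/2)" by (rule U_eq[OF h])
  moreover have "U s (1/2) \<le> Mst c lam R1" using U_bound[OF U1] h by blast
  ultimately show ?thesis by (simp add: power2_eq_square)
qed

lemma no_small:
  assumes U1: "U s 1 = 0" and pos: "\<And>t. 0 < t \<Longrightarrow> t < 1 \<Longrightarrow> 0 < U s t"
    and sm: "\<And>t. t \<in> {0..1} \<Longrightarrow> U s t \<le> \<delta>2"
  shows False
proof -
  obtain cc where cc: "0 < cc" "cc < 1" "0 < m cc" using m_inner by auto
  have "0 < integral {0..1} (\<lambda>t. (lam1 - lam) * (m t * U s t * phi t))"
  proof (rule integral_pos[where c=cc])
    show "continuous_on {0..1} (\<lambda>t. (lam1 - lam) * (m t * U s t * phi t))"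
      by (intro continuous_intros mc U_cont phi_cont)
    fix x :: real assume x: "x \<in> {0..1}"
    show "0 \<le> (lam1 - lam) * (m x * U s x * phi x)"
      using lam m0[OF x] U_nn[of s x] U1 x phi_nn[OF x] by simp
  next
    show "0 < (lam1 - lam) * (m cc * U s cc * phi cc)" using lam cc pos[of cc] phi_pos[of cc] by simp
  qed (use cc in auto)
  also have "\<dots> \<le> integral {0..1} (\<lambda>t. U s t * (lam1 * m t * phi t) - G t (U s t) * phi t)"
  proof (rule integral_le)
    show "(\<lambda>t. (lam1 - lam) * (m t * U s t * phi t)) integrable_on {0..1}"
      by (rule int01c) (auto intro!: continuous_intros mc U_cont phi_cont)
    show "(\<lambda>t. U s t * (lam1 * m t * phi t) - G t (U s t) * phi t) integrable_on {0..1}" by (rule int01c[OF fc1]) auto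
    fix t :: real assume t: "t \<in> {0..1}"
    have "G t (U s t) \<le> lam * m t * U s t" using Gup[OF t U_nn[of s t] sm[OF t]] U1 t by simp
    then have "G t (U s t) * phi t \<le> (lam * m t * U s t) * phi t" using phi_nn[OF t] by (rule mult_right_mono)
    then show "(lam1 - lam) * (m t * U s t * phi t) \<le> U s t * (lam1 * m t * phi t) - G t (U s t) * phi t"
      by (simp add: algebra_simps)
  qed
  also have "\<dots> = 0" using ident[of 1 s] U1 phi_1 by simp
  finally show False by simp
qed

lemma U_le_st:
  assumes t: "t \<in> {0..1}"
  shows "U s t \<le> s * t"
proof -
  have "(\<lambda>t. U s t - s * t) t \<le> (\<lambda>t. U s t - s * t) 0"
  proof (rule mono01[where f="\<lambda>t. U s t - s * t" and f'="\<lambda>t. dU s t - s" and a=0 and b=t])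
    show "\<And>x. x \<in> {0..1} \<Longrightarrow> ((\<lambda>t. U s t - s * t) has_real_derivative dU s x - s) (at x within {0..1})"
      using U_deriv by (auto intro!: derivative_eq_intros)
    fix x :: real assume "x \<in> {0..t}"
    then have "dU s x \<le> dU s 0" using t by (intro dU_mono) auto
    moreover have "dU s 0 = s" unfolding dU_def dsol_def by simp
    ultimately show "dU s x - s \<le> 0" by simp
  qed (use t in auto)
  then show ?thesis using U_0 by simp
qed

lemma dU_pos_contra:
  assumes T: "0 < T" "T \<le> 1" and UT: "U s T = 0" and pos: "\<And>t. 0 < t \<Longrightarrow> t < T \<Longrightarrow> 0 < U s t"
    and d: "0 \<le> dU s T"
  shows False
proof -
  have "U s (T/2) \<le> U s T"
  proof (rule mono01'[where f="U s" and f'="dU s" and a="T/2" and b=T])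
    show "\<And>t. t \<in> {0..1} \<Longrightarrow> (U s has_real_derivative dU s t) (at t within {0..1})" by (rule U_deriv)
    fix t :: real assume "t \<in> {T/2..T}"
    then have "dU s T \<le> dU s t" using T by (intro dU_mono) auto
    then show "0 \<le> dU s t" using d by simp
  qed (use T in auto)
  then show False using pos[of "T/2"] T UT by simp
qed

lemma small: "0 < U \<delta>2 1"
proof (rule ccontr)
  assume "\<not> 0 < U \<delta>2 1"
  then have n1: "U \<delta>2 1 \<le> 0" by simp
  obtain a where a: "0 < a" "a \<le> 1" "\<And>t. 0 < t \<Longrightarrow> t \<le> a \<Longrightarrow> 0 < U \<delta>2 t" using U_pos0[OF d2] by blast
  obtain T where T: "a < T" "T \<le> 1" "U \<delta>2 T = 0" "\<And>t. 0 < t \<and> t < T \<Longrightarrow> 0 < U \<delta>2 t"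
    using first_zero[OF U_cont a(1) a(3) _ _ n1] by auto
  have T0: "0 < T" using a T by simp
  have Unn: "0 \<le> U \<delta>2 t" if "t \<in> {0..T}" for t
    using T(3) T(4)[of t] U_0 that by (cases "t = 0"; cases "t = T") (auto simp: less_imp_le)
  have Ule: "U \<delta>2 t \<le> \<delta>2" if "t \<in> {0..1}" for t
  proof -
    have "U \<delta>2 t \<le> \<delta>2 * t" by (rule U_le_st[OF that])
    also have "\<dots> \<le> \<delta>2 * 1" using that d2 by (intro mult_left_mono) auto
    finally show ?thesis by simp
  qed
  have dneg: "dU \<delta>2 T < 0"
    using dU_pos_contra[OF T0 T(2) T(3)] T(4) by force
  have "0 \<le> integral {0..T} (\<lambda>t. U \<delta>2 t * (lam1 * m t * phi t) - G t (U \<delta>2 t) * phi t)"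
  proof (rule integral_nonneg)
    show "(\<lambda>t. U \<delta>2 t * (lam1 * m t * phi t) - G t (U \<delta>2 t) * phi t) integrable_on {0..T}"
      by (rule int01c[OF fc1]) (use T0 T in auto)
    fix t :: real assume t: "t \<in> {0..T}"
    then have t1: "t \<in> {0..1}" using T by auto
    have "G t (U \<delta>2 t) \<le> lam * m t * U \<delta>2 t" by (rule Gup[OF t1 Unn[OF t] Ule[OF t1]])
    then have "G t (U \<delta>2 t) * phi t \<le> (lam * m t * U \<delta>2 t) * phi t" using phi_nn[OF t1] by (rule mult_right_mono)
    moreover have "(lam * m t * U \<delta>2 t) * phi t \<le> (lam1 * m t * U \<delta>2 t) * phi t"
      using lam m0[OF t1] Unn[OF t] phi_nn[OF t1] by (intro mult_right_mono) (auto intro: mult_right_mono)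
    ultimately show "0 \<le> U \<delta>2 t * (lam1 * m t * phi t) - G t (U \<delta>2 t) * phi t" by (simp add: algebra_simps)
  qed
  also have "\<dots> = dU \<delta>2 T * phi T" using ident[of T \<delta>2] T T0 by simp
  finally have "0 \<le> dU \<delta>2 T * phi T" .
  show False
  proof (cases "T = 1")
    case True
    show False
    proof (rule no_small[of \<delta>2])
      show "U \<delta>2 1 = 0" using T True by simp
      show "\<And>t. 0 < t \<Longrightarrow> t < 1 \<Longrightarrow> 0 < U \<delta>2 t" using T(4) True by auto
      show "\<And>t. t \<in> {0..1} \<Longrightarrow> U \<delta>2 t \<le> \<delta>2" by (rule Ule)
    qed
  next
    case False
    then have "0 < phi T" using phi_pos[of T] T T0 by simp
    then have "dU \<delta>2 T * phi T < 0" using dneg by (simp add: mult_neg_pos)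
    then show False using \<open>0 \<le> dU \<delta>2 T * phi T\<close> by simp
  qed
qed

definition Sb where "Sb = 2 * Mst c lam R1 + Gmax / 2"

lemma large: "U (Sb + 1) 1 < 0"
proof (rule ccontr)
  assume "\<not> U (Sb + 1) 1 < 0"
  then have "0 \<le> U (Sb + 1) 1" by simp
  from s_bound[OF this] show False unfolding Sb_def by simp
qed

theorem approx:
  "\<exists>s. \<delta>2 \<le> s \<and> s \<le> Sb + 1 \<and> U s 1 = 0 \<and> (\<forall>t. 0 < t \<and> t < 1 \<longrightarrow> 0 < U s t)
     \<and> (\<forall>t\<in>{0..1}. 0 \<le> U s t \<and> U s t \<le> Mst c lam R1) \<and> (\<exists>t\<in>{0..1}. \<delta>2 < U s t)"
proof -
  have dS: "\<delta>2 \<le> Sb" unfolding Sb_def using s_bound[of \<delta>2] small by simp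
  have "\<exists>x. \<delta>2 \<le> x \<and> x \<le> Sb + 1 \<and> U x 1 = 0"
  proof (rule IVT2'[where f="\<lambda>s. U s 1"])
    show "U (Sb + 1) 1 \<le> 0" using large by simp
    show "0 \<le> U \<delta>2 1" using small by simp
    show "\<delta>2 \<le> Sb + 1" using dS by simp
    show "continuous_on {\<delta>2..Sb + 1} (\<lambda>s. U s 1)" by (rule continuous_on_subset[OF Phi_cont]) simp
  qed
  then obtain s where s: "\<delta>2 \<le> s" "s \<le> Sb + 1" "U s 1 = 0" by blast
  have s0: "0 < s" using s d2 by simp
  have nn: "0 \<le> U s t" if "t \<in> {0..1}" for t using U_nn[of s t] s that by simp
  have pos: "0 < U s t" if t: "0 < t" "t < 1" for t
  proof (rule ccontr)
    assume "\<not> 0 < U s t"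
    then have U0: "U s t = 0" using nn[of t] t by simp
    obtain a where a: "0 < a" "a \<le> 1" "\<And>t. 0 < t \<Longrightarrow> t \<le> a \<Longrightarrow> 0 < U s t" using U_pos0[OF s0] by blast
    define t' where "t' = min a (t/2)"
    have t': "0 < t'" "t' < t" "t' \<le> a" unfolding t'_def using a t by auto
    have "(1 - t) * U s t' + (t - t') * U s 1 \<le> (1 - t') * U s t" by (rule U_concave) (use t' t in auto)
    then have "(1 - t) * U s t' \<le> 0" using U0 s by simp
    moreover have "0 < (1 - t) * U s t'" using a(3)[OF t'(1,3)] t by simp
    ultimately show False by simp
  qed
  have big: "\<exists>t\<in>{0..1}. \<delta>2 < U s t"
  proof (rule ccontr)
    assume "\<not> ?thesis"
    then have "\<And>t. t \<in> {0..1} \<Longrightarrow> U s t \<le> \<delta>2" by force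
    then show False using no_small[of s, OF s(3) pos] by blast
  qed
  have "\<forall>t\<in>{0..1}. 0 \<le> U s t \<and> U s t \<le> Mst c lam R1" using nn U_bound[of s] s(3) by simp
  then show ?thesis using s pos big by blast
qed

end


lemma hat_grid:
  assumes "j \<le> M"
  shows "(\<Sum>k=0..M. hat k (real j) * f k) = f j"
proof -
  have "(\<Sum>k=0..M. hat k (real j) * f k) = (\<Sum>k\<in>{j}. hat k (real j) * f k)"
  proof (rule sum.mono_neutral_right)
    show "\<forall>k\<in>{0..M} - {j}. hat k (real j) * f k = 0"
    proof
      fix k assume "k \<in> {0..M} - {j}"
      then have "k \<noteq> j" by auto
      then have "\<bar>real j - real k\<bar> \<ge> 1" by linarith
      then have "hat k (real j) = 0" unfolding hat_def by auto
      then show "hat k (real j) * f k = 0" by simp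
    qed
  qed (use assms in auto)
  then show ?thesis unfolding hat_def by simp
qed

lemma hat_close:
  fixes y :: real
  assumes "\<And>k. k \<le> M \<Longrightarrow> hat k y \<noteq> 0 \<Longrightarrow> \<bar>f k - z\<bar> \<le> e" "0 \<le> y" "y \<le> real M"
  shows "\<bar>(\<Sum>k=0..M. hat k y * f k) - z\<bar> \<le> e"
proof -
  have s1: "(\<Sum>k=0..M. hat k y) = 1" by (rule hat_sum1) (use assms in auto)
  have "(\<Sum>k=0..M. hat k y * f k) \<le> (\<Sum>k=0..M. hat k y * ((z + e) + 0 * real k))"
    by (rule hat_mono) (use assms(1) in force)
  also have "\<dots> = z + e" using hat_aff[of y M "z + e" 0] assms by simp
  finally have A: "(\<Sum>k=0..M. hat k y * f k) \<le> z + e" .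
  have "(\<Sum>k=0..M. hat k y * ((z - e) + 0 * real k)) \<le> (\<Sum>k=0..M. hat k y * f k)"
    by (rule hat_mono) (use assms(1) in force)
  moreover have "(\<Sum>k=0..M. hat k y * ((z - e) + 0 * real k)) = z - e" using hat_aff[of y M "z - e" 0] assms by simp
  ultimately have B: "z - e \<le> (\<Sum>k=0..M. hat k y * f k)" by simp
  show ?thesis using A B by linarith
qed

locale mainF = weight +
  fixes F :: "real \<Rightarrow> real \<Rightarrow> real" and lam c \<delta> R :: real
  assumes Fc: "continuous_on ({0..1} \<times> {0..}) (\<lambda>(t,x). F t x)"
    and Fnn: "\<And>t x. t \<in> {0..1} \<Longrightarrow> 0 \<le> x \<Longrightarrow> 0 \<le> F t x"
    and Fup: "\<And>t x. t \<in> {0..1} \<Longrightarrow> 0 \<le> x \<Longrightarrow> x < \<delta> \<Longrightarrow> F t x \<le> lam * m t * x"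
    and Flow: "\<And>t x. t \<in> {0..1} \<Longrightarrow> R \<le> x \<Longrightarrow> c * lam * m t * x \<le> F t x"
    and lamF: "0 < lam" "lam < lam1" "lam1 < c * lam" "0 < c"
    and dR: "0 < \<delta>" "\<delta> < R"
begin

definition "R1 = R + 1"
definition "\<delta>2 = \<delta> / 2"
definition "Ms = Mst c lam R1"
definition XX :: nat where "XX = nat \<lceil>Ms + R1\<rceil> + 1"

lemma Ms_nn: "0 \<le> Ms" unfolding Ms_def R1_def using Mst_nn[of c lam "R + 1"] lamF dR by simp

lemma XX: "Ms + R1 \<le> real XX" "0 < real XX" "R1 \<le> real XX" "Ms \<le> real XX" "R \<le> real XX" "\<delta>2 \<le> real XX"
proof -
  show 1: "Ms + R1 \<le> real XX" unfolding XX_def by linarith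
  show "0 < real XX" unfolding XX_def by simp
  have R1: "0 \<le> R1" unfolding R1_def using dR by simp
  show "R1 \<le> real XX" using 1 Ms_nn by linarith
  show "Ms \<le> real XX" using 1 R1 by linarith
  show "R \<le> real XX" using 1 Ms_nn unfolding R1_def by linarith
  show "\<delta>2 \<le> real XX" using 1 Ms_nn dR unfolding R1_def \<delta>2_def by linarith
qed

lemma F0: "t \<in> {0..1} \<Longrightarrow> F t 0 = 0"
  using Fup[of t 0] Fnn[of t 0] dR by simp

lemma Fcomp:
  assumes "continuous_on S f" "continuous_on S g" "\<And>p. p \<in> S \<Longrightarrow> f p \<in> {0..1}" "\<And>p. p \<in> S \<Longrightarrow> 0 \<le> g p"
  shows "continuous_on S (\<lambda>p. F (f p) (g p))"
proof -
  have "continuous_on S ((\<lambda>(t,x). F t x) \<circ> (\<lambda>p. (f p, g p)))"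
    by (rule continuous_on_compose) (intro continuous_intros assms, rule continuous_on_subset[OF Fc], use assms in auto)
  then show ?thesis by (simp add: o_def)
qed

definition Fb where "Fb = Sup ((\<lambda>(t,x). F t x) ` ({0..1} \<times> {0..real XX}))"

lemma Fb: "t \<in> {0..1} \<Longrightarrow> 0 \<le> x \<Longrightarrow> x \<le> real XX \<Longrightarrow> F t x \<le> Fb" and Fb_nn: "0 \<le> Fb"
proof -
  have "compact ((\<lambda>(t,x). F t x) ` ({0..1} \<times> {0..real XX}))"
    by (intro compact_continuous_image continuous_on_subset[OF Fc] compact_Times) auto
  then have bdd: "bdd_above ((\<lambda>(t,x). F t x) ` ({0..1} \<times> {0..real XX}))"
    by (intro bounded_imp_bdd_above compact_imp_bounded)
  show "t \<in> {0..1} \<Longrightarrow> 0 \<le> x \<Longrightarrow> x \<le> real XX \<Longrightarrow> F t x \<le> Fb"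
    unfolding Fb_def by (rule cSup_upper[OF _ bdd]) force
  have "F 0 0 \<le> Fb" unfolding Fb_def by (rule cSup_upper[OF _ bdd]) force
  then show "0 \<le> Fb" using F0[of 0] by simp
qed

definition PL :: "nat \<Rightarrow> real \<Rightarrow> real \<Rightarrow> real" where
  "PL n t x = (\<Sum>k=0..n * XX. F t (real k / real n) * hat k (real n * x))"

definition Gn :: "nat \<Rightarrow> real \<Rightarrow> real \<Rightarrow> real" where
  "Gn n t x = PL n t (min x (real XX)) + F t (real XX) * (max x (real XX) - real XX) / real XX"

definition Lgn :: "nat \<Rightarrow> real" where "Lgn n = (real (n * XX) + 1) * real n * Fb + Fb / real XX"

lemma PL_alt: "PL n t x = (\<Sum>k=0..n * XX. hat k (real n * x) * F t (real k / real n))"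
  unfolding PL_def by (simp add: mult.commute)

lemma Gn_cont: "continuous_on ({0..1} \<times> UNIV) (\<lambda>(t,x). Gn n t x)"
proof -
  have "continuous_on ({0..1} \<times> UNIV) (\<lambda>p. (\<Sum>k=0..n * XX. F (fst p) (real k / real n) * hat k (real n * min (snd p) (real XX)))
     + F (fst p) (real XX) * (max (snd p) (real XX) - real XX) / real XX)"
    by (intro continuous_intros Fcomp hat_cont) (use XX(2) in \<open>auto simp: mem_Times_iff\<close>)
  then show ?thesis unfolding Gn_def PL_def by (simp add: case_prod_beta)
qed

lemma Gn_nn: "t \<in> {0..1} \<Longrightarrow> 0 \<le> Gn n t x"
  unfolding Gn_def PL_def using XX(2)
  by (intro add_nonneg_nonneg sum_nonneg mult_nonneg_nonneg divide_nonneg_nonneg Fnn hat_nn) auto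

lemma Gn_lip:
  assumes t: "t \<in> {0..1}"
  shows "\<bar>Gn n t x - Gn n t y\<bar> \<le> Lgn n * \<bar>x - y\<bar>"
proof -
  have mm: "\<bar>min x (real XX) - min y (real XX)\<bar> \<le> \<bar>x - y\<bar>" "\<bar>max x (real XX) - max y (real XX)\<bar> \<le> \<bar>x - y\<bar>"
    by (auto simp: min_def max_def abs_if)
  have "\<bar>PL n t (min x (real XX)) - PL n t (min y (real XX))\<bar>
      = \<bar>\<Sum>k=0..n * XX. F t (real k / real n) * (hat k (real n * min x (real XX)) - hat k (real n * min y (real XX)))\<bar>"
    unfolding PL_def by (simp add: sum_subtractf[symmetric] algebra_simps)
  also have "\<dots> \<le> (\<Sum>k=0..n * XX. \<bar>F t (real k / real n) * (hat k (real n * min x (real XX)) - hat k (real n * min y (real XX)))\<bar>)"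
    by (rule sum_abs)
  also have "\<dots> \<le> (\<Sum>k=0..n * XX. Fb * (real n * \<bar>x - y\<bar>))"
  proof (rule sum_mono)
    fix k assume k: "k \<in> {0..n * XX}"
    have kx: "real k / real n \<le> real XX"
    proof (cases "n = 0")
      case False
      have "real k \<le> real n * real XX" using k by (simp flip: of_nat_mult)
      then show ?thesis using False by (simp add: field_simps)
    qed (simp add: XX(2) less_imp_le)
    have "\<bar>F t (real k / real n)\<bar> \<le> Fb" using Fnn[OF t] Fb[OF t _ kx] by simp
    moreover have "\<bar>hat k (real n * min x (real XX)) - hat k (real n * min y (real XX))\<bar> \<le> real n * \<bar>x - y\<bar>"
    proof -
      have "\<bar>hat k (real n * min x (real XX)) - hat k (real n * min y (real XX))\<bar>
          \<le> \<bar>real n * min x (real XX) - real n * min y (real XX)\<bar>" by (rule hat_lip)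
      also have "\<dots> = real n * \<bar>min x (real XX) - min y (real XX)\<bar>" by (simp add: abs_mult right_diff_distrib[symmetric])
      also have "\<dots> \<le> real n * \<bar>x - y\<bar>" using mm by (intro mult_left_mono) auto
      finally show ?thesis .
    qed
    ultimately show "\<bar>F t (real k / real n) * (hat k (real n * min x (real XX)) - hat k (real n * min y (real XX)))\<bar>
        \<le> Fb * (real n * \<bar>x - y\<bar>)" unfolding abs_mult by (intro mult_mono) auto
  qed
  also have "\<dots> = (real (n * XX) + 1) * real n * Fb * \<bar>x - y\<bar>" by simp
  finally have P: "\<bar>PL n t (min x (real XX)) - PL n t (min y (real XX))\<bar> \<le> (real (n * XX) + 1) * real n * Fb * \<bar>x - y\<bar>" .
  have "\<bar>F t (real XX) * (max x (real XX) - real XX) / real XX - F t (real XX) * (max y (real XX) - real XX) / real XX\<bar>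
      = \<bar>F t (real XX)\<bar> * \<bar>max x (real XX) - max y (real XX)\<bar> / real XX"
    using XX(2) by (simp add: abs_mult diff_divide_distrib[symmetric] right_diff_distrib[symmetric] abs_divide)
  also have "\<dots> \<le> Fb * \<bar>x - y\<bar> / real XX"
    using Fnn[OF t, of "real XX"] Fb[OF t, of "real XX"] XX(2) mm(2)
    by (intro divide_right_mono mult_mono) auto
  finally have E: "\<bar>F t (real XX) * (max x (real XX) - real XX) / real XX - F t (real XX) * (max y (real XX) - real XX) / real XX\<bar>
      \<le> Fb * \<bar>x - y\<bar> / real XX" .
  have "\<bar>Gn n t x - Gn n t y\<bar> \<le> (real (n * XX) + 1) * real n * Fb * \<bar>x - y\<bar> + Fb * \<bar>x - y\<bar> / real XX"
    using P E unfolding Gn_def by linarith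
  then show ?thesis unfolding Lgn_def by (simp add: algebra_simps)
qed

lemma Lgn_nn: "0 \<le> Lgn n" unfolding Lgn_def using Fb_nn XX(2) by simp

end


context mainF begin

lemma Gn_low_eq: "0 \<le> x \<Longrightarrow> x \<le> real XX \<Longrightarrow> Gn n t x = PL n t x"
  unfolding Gn_def by (simp add: min_def max_def)

lemma ny: "0 \<le> x \<Longrightarrow> x \<le> real XX \<Longrightarrow> real n * x \<le> real (n * XX)"
  by (simp add: mult_left_mono)

lemma Gn_up:
  assumes n: "1 \<le> real n * \<delta>2" and t: "t \<in> {0..1}" and x: "0 \<le> x" "x \<le> \<delta>2"
  shows "Gn n t x \<le> lam * m t * x"
proof -
  have "n \<noteq> 0" using n by (cases "n = 0") auto
  then have n0: "0 < real n" by simp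
  have xX: "x \<le> real XX" using x XX(6) by simp
  have "Gn n t x = (\<Sum>k=0..n * XX. hat k (real n * x) * F t (real k / real n))"
    using Gn_low_eq[OF x(1) xX] PL_alt by simp
  also have "\<dots> \<le> (\<Sum>k=0..n * XX. hat k (real n * x) * (0 + (lam * m t / real n) * real k))"
  proof (rule hat_mono)
    fix k assume k: "k \<le> n * XX" "hat k (real n * x) \<noteq> 0"
    have "\<bar>real n * x - real k\<bar> < 1" by (rule hat_nz[OF k(2)])
    then have "real k < real n * x + 1" by linarith
    then have "real k / real n < (real n * x + 1) / real n" using n0 by (rule divide_strict_right_mono)
    moreover have "(real n * x + 1) / real n = x + 1 / real n" using n0 by (simp add: field_simps)
    ultimately have "real k / real n < x + 1 / real n" by simp
    moreover have "1 / real n \<le> \<delta>2" using n n0 by (simp add: field_simps)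
    ultimately have "real k / real n < \<delta>" using x unfolding \<delta>2_def by linarith
    then have "F t (real k / real n) \<le> lam * m t * (real k / real n)" by (intro Fup[OF t]) auto
    then show "F t (real k / real n) \<le> 0 + lam * m t / real n * real k" by simp
  qed
  also have "\<dots> = 0 + (lam * m t / real n) * (real n * x)" by (rule hat_aff) (use x xX ny in auto)
  also have "\<dots> = lam * m t * x" using n0 by simp
  finally show ?thesis .
qed

lemma Gn_low:
  assumes n: "1 \<le> n" and t: "t \<in> {0..1}" and x: "0 \<le> x"
  shows "c * lam * m t * x - c * lam * m t * R1 \<le> Gn n t x"
proof -
  have clm: "0 \<le> c * lam * m t" using lamF m0[OF t] by simp
  have n0: "0 < real n" using n by simp
  consider "x \<le> R1" | "R1 < x" "x \<le> real XX" | "real XX < x" by linarith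
  then show ?thesis
  proof cases
    case 1
    have "c * lam * m t * x \<le> c * lam * m t * R1" using clm 1 by (intro mult_left_mono) auto
    then show ?thesis using Gn_nn[OF t, of n x] by linarith
  next
    case 2
    have "c * lam * m t * x = 0 + (c * lam * m t / real n) * (real n * x)" using n0 by simp
    also have "\<dots> = (\<Sum>k=0..n * XX. hat k (real n * x) * (0 + (c * lam * m t / real n) * real k))"
      by (rule hat_aff[symmetric]) (use x 2 ny in auto)
    also have "\<dots> \<le> (\<Sum>k=0..n * XX. hat k (real n * x) * F t (real k / real n))"
    proof (rule hat_mono)
      fix k assume k: "k \<le> n * XX" "hat k (real n * x) \<noteq> 0"
      have "\<bar>real n * x - real k\<bar> < 1" by (rule hat_nz[OF k(2)])
      then have "real n * x - 1 < real k" by linarith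
      then have "(real n * x - 1) / real n < real k / real n" using n0 by (rule divide_strict_right_mono)
      moreover have "(real n * x - 1) / real n = x - 1 / real n" using n0 by (simp add: field_simps)
      ultimately have "x - 1 / real n < real k / real n" by simp
      moreover have "1 / real n \<le> 1" using n by simp
      ultimately have "R \<le> real k / real n" using 2 unfolding R1_def by linarith
      then have "c * lam * m t * (real k / real n) \<le> F t (real k / real n)" by (rule Flow[OF t])
      then show "0 + c * lam * m t / real n * real k \<le> F t (real k / real n)" by simp
    qed
    also have "\<dots> = Gn n t x" using Gn_low_eq[OF x 2(2)] PL_alt by simp
    finally have "c * lam * m t * x \<le> Gn n t x" .
    moreover have "0 \<le> c * lam * m t * R1" using clm unfolding R1_def using dR by simp
    ultimately show ?thesis by linarith
  next
    case 3
    have "PL n t (real XX) = F t (real XX)"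
    proof -
      have "PL n t (real XX) = (\<Sum>k=0..n * XX. hat k (real (n * XX)) * F t (real k / real n))"
        unfolding PL_alt by simp
      also have "\<dots> = F t (real (n * XX) / real n)" by (rule hat_grid) simp
      also have "\<dots> = F t (real XX)" using n0 by simp
      finally show ?thesis .
    qed
    then have "Gn n t x = F t (real XX) * x / real XX" unfolding Gn_def using 3 XX(2)
      by (simp add: field_simps)
    moreover have "c * lam * m t * real XX \<le> F t (real XX)" by (rule Flow[OF t XX(5)])
    then have "c * lam * m t * real XX * x / real XX \<le> F t (real XX) * x / real XX"
      using x XX(2) by (intro divide_right_mono mult_right_mono) auto
    ultimately have "c * lam * m t * x \<le> Gn n t x" using XX(2) by simp
    moreover have "0 \<le> c * lam * m t * R1" using clm unfolding R1_def using dR by simp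
    ultimately show ?thesis by linarith
  qed
qed

lemma Gn_b:
  assumes t: "t \<in> {0..1}" and x: "0 \<le> x" "x \<le> Ms"
  shows "Gn n t x \<le> Fb"
proof -
  have xX: "x \<le> real XX" using x XX(4) by simp
  have "Gn n t x = (\<Sum>k=0..n * XX. hat k (real n * x) * F t (real k / real n))"
    using Gn_low_eq[OF x(1) xX] PL_alt by simp
  also have "\<dots> \<le> (\<Sum>k=0..n * XX. hat k (real n * x) * (Fb + 0 * real k))"
  proof (rule hat_mono)
    fix k assume k: "k \<le> n * XX"
    have "real k / real n \<le> real XX"
    proof (cases "n = 0")
      case False
      have "real k \<le> real n * real XX" using k by (simp flip: of_nat_mult)
      then show ?thesis using False by (simp add: field_simps)
    qed (simp add: XX(2) less_imp_le)
    then show "F t (real k / real n) \<le> Fb + 0 * real k" using Fb[OF t] by simp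
  qed
  also have "\<dots> = Fb + 0 * (real n * x)" by (rule hat_aff) (use x xX ny in auto)
  finally show ?thesis by simp
qed

lemma shoot_n:
  assumes n: "1 \<le> n" "1 \<le> real n * \<delta>2"
  shows "shoot m (Gn n) (Lgn n) lam c \<delta>2 R1 Fb"
proof unfold_locales
  show "continuous_on ({0..1} \<times> UNIV) (\<lambda>(t, x). Gn n t x)" by (rule Gn_cont)
  show "\<And>t x y. t \<in> {0..1} \<Longrightarrow> \<bar>Gn n t x - Gn n t y\<bar> \<le> Lgn n * \<bar>x - y\<bar>" by (rule Gn_lip)
  show "0 \<le> Lgn n" by (rule Lgn_nn)
  show "\<And>t x. t \<in> {0..1} \<Longrightarrow> 0 \<le> Gn n t x" by (rule Gn_nn)
  show "\<And>t x. t \<in> {0..1} \<Longrightarrow> 0 \<le> x \<Longrightarrow> x \<le> \<delta>2 \<Longrightarrow> Gn n t x \<le> lam * m t * x" by (rule Gn_up[OF n(2)])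
  show "\<And>t x. t \<in> {0..1} \<Longrightarrow> 0 \<le> x \<Longrightarrow> c * lam * m t * x - c * lam * m t * R1 \<le> Gn n t x" by (rule Gn_low[OF n(1)])
  show "\<And>t x. t \<in> {0..1} \<Longrightarrow> 0 \<le> x \<Longrightarrow> x \<le> Mst c lam R1 \<Longrightarrow> Gn n t x \<le> Fb" using Gn_b unfolding Ms_def by blast
  show "0 < lam" "lam < weight.lam1 m" "weight.lam1 m < c * lam" "0 < c" using lamF by auto
  show "0 < \<delta>2" unfolding \<delta>2_def using dR by simp
  show "0 \<le> R1" unfolding R1_def using dR by simp
qed

lemma approx_n:
  assumes n: "1 \<le> n" "1 \<le> real n * \<delta>2"
  shows "\<exists>u s. isol (Gn n) s u \<and> u 1 = 0 \<and> (\<forall>t. 0 < t \<and> t < 1 \<longrightarrow> 0 < u t)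
     \<and> (\<forall>t\<in>{0..1}. 0 \<le> u t \<and> u t \<le> Ms) \<and> (\<exists>t\<in>{0..1}. \<delta>2 < u t) \<and> \<delta>2 \<le> s \<and> s \<le> 2 * Ms + Fb / 2 + 1"
proof -
  interpret S: shoot m "Gn n" "Lgn n" lam c \<delta>2 R1 Fb by (rule shoot_n[OF n])
  obtain s where s: "\<delta>2 \<le> s" "s \<le> S.Sb + 1" "S.U s 1 = 0" "\<forall>t. 0 < t \<and> t < 1 \<longrightarrow> 0 < S.U s t"
     "\<forall>t\<in>{0..1}. 0 \<le> S.U s t \<and> S.U s t \<le> Mst c lam R1" "\<exists>t\<in>{0..1}. \<delta>2 < S.U s t"
    using S.approx by blast
  show ?thesis
    by (rule exI[of _ "S.U s"], rule exI[of _ s]) (use s S.U_isol in \<open>auto simp: S.Sb_def Ms_def\<close>)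
qed

end


lemma formula_deriv:
  fixes g u :: "real \<Rightarrow> real"
  assumes g: "continuous_on {0..1} g" and u: "\<And>t. t \<in> {0..1} \<Longrightarrow> u t = s * t - IntK g t" and t: "t \<in> {0..1}"
  shows "(u has_real_derivative (s - integral {0..t} g)) (at t within {0..1})"
    and "((\<lambda>t. s - integral {0..t} g) has_real_derivative - g t) (at t within {0..1})"
proof -
  have "((\<lambda>t. s * t - IntK g t) has_real_derivative s * 1 - integral {0..t} g) (at t within {0..1})"
    by (intro DERIV_diff DERIV_cmult[OF DERIV_ident] IntK_deriv[OF g t])
  then have "((\<lambda>t. s * t - IntK g t) has_real_derivative s - integral {0..t} g) (at t within {0..1})" by simp
  then show "(u has_real_derivative (s - integral {0..t} g)) (at t within {0..1})"
    by (rule has_field_derivative_transform_within[where d=1]) (use t u in auto)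
  show "((\<lambda>t. s - integral {0..t} g) has_real_derivative - g t) (at t within {0..1})"
    using DERIV_diff[OF DERIV_const integral_has_real_derivative[OF g t]] by simp
qed

context mainF begin

definition n0 :: nat where "n0 = nat \<lceil>1 / \<delta>2\<rceil> + 1"

lemma n0: "n0 \<le> n \<Longrightarrow> 1 \<le> n \<and> 1 \<le> real n * \<delta>2"
proof -
  assume n: "n0 \<le> n"
  have d: "0 < \<delta>2" unfolding \<delta>2_def using dR by simp
  have a: "1 / \<delta>2 \<le> real (nat \<lceil>1 / \<delta>2\<rceil>)" by (rule real_nat_ceiling_ge)
  have b: "nat \<lceil>1 / \<delta>2\<rceil> \<le> n" using n unfolding n0_def by linarith
  then have "real (nat \<lceil>1 / \<delta>2\<rceil>) \<le> real n" by (simp only: of_nat_le_iff)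
  with a have "1 / \<delta>2 \<le> real n" by linarith
  then have "1 \<le> real n * \<delta>2" using d by (simp add: field_simps)
  moreover have "1 \<le> n" using n unfolding n0_def by simp
  ultimately show ?thesis by simp
qed

definition "Sbb = 2 * Ms + Fb / 2 + 1"

definition AP :: "nat \<Rightarrow> (real \<Rightarrow> real) \<Rightarrow> real \<Rightarrow> bool" where
  "AP n u s \<longleftrightarrow> isol (Gn n) s u \<and> u 1 = 0 \<and> (\<forall>t. 0 < t \<and> t < 1 \<longrightarrow> 0 < u t)
     \<and> (\<forall>t\<in>{0..1}. 0 \<le> u t \<and> u t \<le> Ms) \<and> (\<exists>t\<in>{0..1}. \<delta>2 < u t) \<and> \<delta>2 \<le> s \<and> s \<le> Sbb"

lemma AP_ex: "\<exists>f. \<forall>j. AP (j + n0) (fst (f j)) (snd (f j))"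
proof -
  have "\<forall>j. \<exists>p. AP (j + n0) (fst p) (snd p)"
  proof
    fix j
    obtain u s where "AP (j + n0) u s"
      using approx_n[of "j + n0"] n0[of "j + n0"] unfolding AP_def Sbb_def by auto
    then show "\<exists>p. AP (j + n0) (fst p) (snd p)" by (intro exI[of _ "(u, s)"]) simp
  qed
  then show ?thesis by (rule choice)
qed

definition ff where "ff = (SOME f. \<forall>j. AP (j + n0) (fst (f j)) (snd (f j)))"
definition uu where "uu j = fst (ff j)"
definition ss where "ss j = snd (ff j)"

lemma uu_AP: "AP (j + n0) (uu j) (ss j)"
  using someI_ex[OF AP_ex] unfolding uu_def ss_def ff_def by blast

definition gg where "gg j \<tau> = Gn (j + n0) \<tau> (uu j \<tau>)"

lemma uu_isol: "isol (Gn (j + n0)) (ss j) (uu j)" using uu_AP unfolding AP_def by blast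
lemma uu_cont: "continuous_on {0..1} (uu j)" using uu_isol unfolding isol_def by blast
lemma uu_range: "t \<in> {0..1} \<Longrightarrow> 0 \<le> uu j t \<and> uu j t \<le> Ms" using uu_AP unfolding AP_def by blast
lemma uu_1: "uu j 1 = 0" using uu_AP unfolding AP_def by blast
lemma uu_big: "\<exists>t\<in>{0..1}. \<delta>2 < uu j t" using uu_AP unfolding AP_def by blast
lemma ss_range: "\<delta>2 \<le> ss j" "ss j \<le> Sbb" using uu_AP unfolding AP_def by blast+
lemma gg_cont: "continuous_on {0..1} (gg j)" unfolding gg_def by (rule isol_gcont[OF Gn_cont uu_isol])
lemma gg_range: "\<tau> \<in> {0..1} \<Longrightarrow> 0 \<le> gg j \<tau> \<and> gg j \<tau> \<le> Fb"
  unfolding gg_def using Gn_nn Gn_b uu_range by blast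
lemma uu_eq: "t \<in> {0..1} \<Longrightarrow> uu j t = ss j * t - IntK (gg j) t"
  using uu_isol unfolding isol_def gg_def by blast

lemma uu_eq2: "t \<in> {0..1} \<Longrightarrow> uu j t = t * IntK (gg j) 1 - IntK (gg j) t"
proof -
  assume t: "t \<in> {0..1}"
  have "ss j = IntK (gg j) 1" using uu_eq[of 1 j] uu_1 by simp
  then show ?thesis using uu_eq[OF t] by (simp add: mult.commute)
qed

definition "Lu = Sbb + Fb"

lemma uu_lip:
  assumes t: "t1 \<in> {0..1}" "t2 \<in> {0..1}"
  shows "\<bar>uu j t1 - uu j t2\<bar> \<le> Lu * \<bar>t1 - t2\<bar>"
proof -
  have db: "\<bar>ss j - integral {0..x} (gg j)\<bar> \<le> Lu" if x: "x \<in> {0..1}" for x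
  proof -
    have i0: "0 \<le> integral {0..x} (gg j)"
      by (rule integral_nonneg) (use x gg_range in \<open>auto intro: int01c[OF gg_cont]\<close>)
    have "integral {0..x} (gg j) \<le> integral {0..x} (\<lambda>_. Fb)"
      by (rule integral_le) (use x gg_range in \<open>auto intro: int01c[OF gg_cont]\<close>)
    also have "\<dots> = x * Fb" using x by simp
    also have "\<dots> \<le> 1 * Fb" using x Fb_nn by (intro mult_right_mono) auto
    finally have i1: "integral {0..x} (gg j) \<le> Fb" by simp
    have "0 \<le> ss j" using ss_range(1)[of j] dR unfolding \<delta>2_def by simp
    then show ?thesis using i0 i1 ss_range(2)[of j] Fb_nn unfolding Lu_def by linarith
  qed
  have der: "\<And>x. x \<in> {0..1} \<Longrightarrow> (uu j has_real_derivative (ss j - integral {0..x} (gg j))) (at x within {0..1})"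
    using formula_deriv(1)[OF gg_cont uu_eq] by blast
  have "\<bar>uu j b - uu j a\<bar> \<le> Lu * (b - a)" if ab: "0 \<le> a" "a \<le> b" "b \<le> 1" for a b
  proof (cases "a = b")
    case False
    then obtain x where x: "x \<in> {a<..<b}" "uu j b - uu j a = (ss j - integral {0..x} (gg j)) * (b - a)"
      using mvt01[OF der, of a b] ab by auto
    have "\<bar>uu j b - uu j a\<bar> = \<bar>ss j - integral {0..x} (gg j)\<bar> * (b - a)" using x ab by (simp add: abs_mult)
    also have "\<dots> \<le> Lu * (b - a)" using db[of x] x ab by (intro mult_right_mono) auto
    finally show ?thesis .
  qed simp
  then show ?thesis using t by (cases "t1 \<le> t2") (force simp: abs_minus_commute)+
qed

lemma Lu_nn: "0 \<le> Lu"
  unfolding Lu_def Sbb_def using Ms_nn Fb_nn by simp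

end


context mainF begin

lemma AA: "\<exists>w k. continuous_on {0..1} w \<and> strict_mono (k :: nat \<Rightarrow> nat) \<and>
    (\<forall>e>0. \<exists>N. \<forall>n x. n \<ge> N \<and> x \<in> {0..1} \<longrightarrow> \<bar>uu (k n) x - w x\<bar> < e)"
proof -
  obtain w k where "continuous_on {0..1} w" "strict_mono (k :: nat \<Rightarrow> nat)"
    "\<And>e. 0 < e \<Longrightarrow> \<exists>N. \<forall>n x. n \<ge> N \<and> x \<in> {0..1} \<longrightarrow> norm (uu (k n) x - w x) < e"
  proof (rule Arzela_Ascoli[of "{0..1::real}" uu Ms])
    show "compact {0..1::real}" by simp
    show "\<And>n x. x \<in> {0..1} \<Longrightarrow> norm (uu n x) \<le> Ms" using uu_range by fastforce
    fix x :: real and e :: real assume x: "x \<in> {0..1}" and e: "0 < e"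
    show "\<exists>d>0. \<forall>n y. y \<in> {0..1} \<and> norm (x - y) < d \<longrightarrow> norm (uu n x - uu n y) < e"
    proof (intro exI[of _ "e / (Lu + 1)"] conjI allI impI)
      show "0 < e / (Lu + 1)" using e Lu_nn by simp
      fix n y assume y: "y \<in> {0..1} \<and> norm (x - y) < e / (Lu + 1)"
      have "\<bar>uu n x - uu n y\<bar> \<le> Lu * \<bar>x - y\<bar>" by (rule uu_lip) (use x y in auto)
      also have "\<dots> \<le> (Lu + 1) * \<bar>x - y\<bar>" by (simp add: mult_right_mono)
      also have "\<dots> < (Lu + 1) * (e / (Lu + 1))" using y Lu_nn by (intro mult_strict_left_mono) auto
      also have "\<dots> = e" using Lu_nn by simp
      finally show "norm (uu n x - uu n y) < e" by simp
    qed
  qed blast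
  then show ?thesis by (intro exI[of _ w] exI[of _ k]) auto
qed

definition ww where "ww = (SOME w. \<exists>k. continuous_on {0..1} w \<and> strict_mono (k :: nat \<Rightarrow> nat) \<and>
    (\<forall>e>0. \<exists>N. \<forall>n x. n \<ge> N \<and> x \<in> {0..1} \<longrightarrow> \<bar>uu (k n) x - w x\<bar> < e))"
definition kk where "kk = (SOME k. continuous_on {0..1} ww \<and> strict_mono (k :: nat \<Rightarrow> nat) \<and>
    (\<forall>e>0. \<exists>N. \<forall>n x. n \<ge> N \<and> x \<in> {0..1} \<longrightarrow> \<bar>uu (k n) x - ww x\<bar> < e))"

lemma ww_kk: "continuous_on {0..1} ww \<and> strict_mono kk \<and>
    (\<forall>e>0. \<exists>N. \<forall>n x. n \<ge> N \<and> x \<in> {0..1} \<longrightarrow> \<bar>uu (kk n) x - ww x\<bar> < e)"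
proof -
  have "\<exists>k. continuous_on {0..1} ww \<and> strict_mono (k :: nat \<Rightarrow> nat) \<and>
    (\<forall>e>0. \<exists>N. \<forall>n x. n \<ge> N \<and> x \<in> {0..1} \<longrightarrow> \<bar>uu (k n) x - ww x\<bar> < e)"
    unfolding ww_def using someI_ex[OF AA] .
  then show ?thesis unfolding kk_def by (rule someI_ex)
qed

lemma ww_cont: "continuous_on {0..1} ww" and kk_mono: "strict_mono kk"
  and ww_conv: "0 < e \<Longrightarrow> \<exists>N. \<forall>n x. n \<ge> N \<and> x \<in> {0..1} \<longrightarrow> \<bar>uu (kk n) x - ww x\<bar> < e"
  using ww_kk by auto

lemma ww_range: "t \<in> {0..1} \<Longrightarrow> 0 \<le> ww t \<and> ww t \<le> Ms"
proof -
  assume t: "t \<in> {0..1}"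
  have "\<not> ww t < 0"
  proof
    assume "ww t < 0"
    then obtain N where N: "\<forall>n x. n \<ge> N \<and> x \<in> {0..1} \<longrightarrow> \<bar>uu (kk n) x - ww x\<bar> < - ww t"
      using ww_conv[of "- ww t"] by auto
    then have "\<bar>uu (kk N) t - ww t\<bar> < - ww t" using t by blast
    then show False using uu_range[OF t, of "kk N"] by linarith
  qed
  moreover have "\<not> Ms < ww t"
  proof
    assume "Ms < ww t"
    then obtain N where N: "\<forall>n x. n \<ge> N \<and> x \<in> {0..1} \<longrightarrow> \<bar>uu (kk n) x - ww x\<bar> < ww t - Ms"
      using ww_conv[of "ww t - Ms"] by auto
    then have "\<bar>uu (kk N) t - ww t\<bar> < ww t - Ms" using t by blast
    then show False using uu_range[OF t, of "kk N"] by linarith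
  qed
  ultimately show "0 \<le> ww t \<and> ww t \<le> Ms" by linarith
qed

definition gw where "gw \<tau> = F \<tau> (ww \<tau>)"

lemma gw_cont: "continuous_on {0..1} gw"
  unfolding gw_def by (rule Fcomp) (use ww_cont ww_range in \<open>auto intro: continuous_on_id\<close>)

lemma gw_nn: "\<tau> \<in> {0..1} \<Longrightarrow> 0 \<le> gw \<tau>"
  unfolding gw_def using Fnn ww_range by blast

lemma gg_conv:
  assumes e: "0 < e"
  shows "\<exists>J. \<forall>j\<ge>J. \<forall>\<tau>\<in>{0..1}. \<bar>gg (kk j) \<tau> - gw \<tau>\<bar> \<le> e"
proof -
  define K where "K = {0..1::real} \<times> {0..real XX}"
  have "uniformly_continuous_on K (\<lambda>(t,x). F t x)"
    unfolding K_def by (intro compact_uniformly_continuous continuous_on_subset[OF Fc] compact_Times) auto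
  then obtain d where d: "0 < d" "\<And>p p'. p \<in> K \<Longrightarrow> p' \<in> K \<Longrightarrow> dist p' p < d \<Longrightarrow>
      dist ((\<lambda>(t,x). F t x) p') ((\<lambda>(t,x). F t x) p) < e"
    unfolding uniformly_continuous_on_def using e by metis
  have Fd: "\<bar>F \<tau> a - F \<tau> b\<bar> < e" if "\<tau> \<in> {0..1}" "a \<in> {0..real XX}" "b \<in> {0..real XX}" "\<bar>a - b\<bar> < d" for \<tau> a b
  proof -
    have "dist ((\<lambda>(t,x). F t x) (\<tau>, a)) ((\<lambda>(t,x). F t x) (\<tau>, b)) < e"
      by (rule d(2)) (use that in \<open>auto simp: K_def dist_Pair_Pair dist_real_def\<close>)
    then show ?thesis by (simp add: dist_real_def)
  qed
  obtain J1 where J1: "\<forall>n x. n \<ge> J1 \<and> x \<in> {0..1} \<longrightarrow> \<bar>uu (kk n) x - ww x\<bar> < d / 2"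
    using ww_conv[of "d/2"] d by auto
  define J2 where "J2 = nat \<lceil>2 / d\<rceil>"
  show ?thesis
  proof (intro exI[of _ "max J1 J2"] allI impI ballI)
    fix j :: nat and \<tau> :: real assume j: "max J1 J2 \<le> j" and t: "\<tau> \<in> {0..1}"
    define n where "n = kk j + n0"
    have jk: "j \<le> kk j" using kk_mono by (rule seq_suble)
    have n1: "1 \<le> n" unfolding n_def n0_def by simp
    have "2 / d \<le> real J2" unfolding J2_def by (rule real_nat_ceiling_ge)
    also have "\<dots> < real n"
    proof -
      have "J2 < n" using j jk unfolding n_def n0_def by simp
      then show ?thesis by simp
    qed
    finally have "2 / d < real n" .
    then have nd: "1 / real n < d / 2" using d n1 by (simp add: field_simps)
    define x where "x = uu (kk j) \<tau>"
    have x: "0 \<le> x" "x \<le> Ms" "\<bar>x - ww \<tau>\<bar> < d / 2" unfolding x_def using uu_range[OF t] J1 j t by auto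
    have xX: "x \<le> real XX" using x XX(4) by simp
    have wX: "0 \<le> ww \<tau>" "ww \<tau> \<le> real XX" using ww_range[OF t] XX(4) by auto
    have "gg (kk j) \<tau> = (\<Sum>k=0..n * XX. hat k (real n * x) * F \<tau> (real k / real n))"
      unfolding gg_def n_def[symmetric] x_def[symmetric] using Gn_low_eq[OF x(1) xX] PL_alt by simp
    moreover have "\<bar>(\<Sum>k=0..n * XX. hat k (real n * x) * F \<tau> (real k / real n)) - F \<tau> (ww \<tau>)\<bar> \<le> e"
    proof (rule hat_close)
      fix k assume k: "k \<le> n * XX" "hat k (real n * x) \<noteq> 0"
      have n0': "0 < real n" using n1 by simp
      have "\<bar>real n * x - real k\<bar> < 1" by (rule hat_nz[OF k(2)])
      then have "\<bar>x - real k / real n\<bar> < 1 / real n"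
      proof -
        assume a: "\<bar>real n * x - real k\<bar> < 1"
        have "\<bar>x - real k / real n\<bar> = \<bar>real n * x - real k\<bar> / real n" using n0'
          by (simp add: field_simps abs_divide)
        also have "\<dots> < 1 / real n" using a n0' by (simp add: divide_strict_right_mono)
        finally show ?thesis .
      qed
      then have "\<bar>real k / real n - ww \<tau>\<bar> < d" using x(3) nd by linarith
      moreover have "real k / real n \<in> {0..real XX}"
      proof -
        have "real k \<le> real n * real XX" using k by (simp flip: of_nat_mult)
        then show ?thesis using n0' by (simp add: field_simps)
      qed
      ultimately show "\<bar>F \<tau> (real k / real n) - F \<tau> (ww \<tau>)\<bar> \<le> e"
        using Fd[OF t, of "real k / real n" "ww \<tau>"] wX by auto
    qed (use x xX ny in auto)
    ultimately show "\<bar>gg (kk j) \<tau> - gw \<tau>\<bar> \<le> e" unfolding gw_def by simp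
  qed
qed

definition "sw = IntK gw 1"

lemma ww_eq: "t \<in> {0..1} \<Longrightarrow> ww t = sw * t - IntK gw t"
proof -
  assume t: "t \<in> {0..1}"
  have h1: "(1::real) \<in> {0..1}" by simp
  have "\<bar>ww t - (t * IntK gw 1 - IntK gw t)\<bar> \<le> 3 * e" if e: "0 < e" for e
  proof -
    obtain J where J: "\<forall>j\<ge>J. \<forall>\<tau>\<in>{0..1}. \<bar>gg (kk j) \<tau> - gw \<tau>\<bar> \<le> e" using gg_conv[OF e] by blast
    obtain N where N: "\<forall>n x. n \<ge> N \<and> x \<in> {0..1} \<longrightarrow> \<bar>uu (kk n) x - ww x\<bar> < e" using ww_conv[OF e] by blast
    define j where "j = max J N"
    have I: "\<bar>IntK (gg (kk j)) x - IntK gw x\<bar> \<le> e" if x: "x \<in> {0..1}" for x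
    proof -
      have "\<bar>IntK (\<lambda>\<tau>. gg (kk j) \<tau> - gw \<tau>) x\<bar> \<le> e"
        by (rule kernel_bound2) (use J x in \<open>auto intro!: continuous_intros gg_cont gw_cont simp: j_def\<close>)
      then show ?thesis using IntK_diff[OF gg_cont gw_cont x] by simp
    qed
    have U: "\<bar>uu (kk j) t - ww t\<bar> < e" using N t unfolding j_def by auto
    have "uu (kk j) t = t * IntK (gg (kk j)) 1 - IntK (gg (kk j)) t" by (rule uu_eq2[OF t])
    moreover have "\<bar>t * IntK (gg (kk j)) 1 - t * IntK gw 1\<bar> \<le> e"
    proof -
      have "\<bar>t * IntK (gg (kk j)) 1 - t * IntK gw 1\<bar> = t * \<bar>IntK (gg (kk j)) 1 - IntK gw 1\<bar>"
        using t by (simp add: abs_mult right_diff_distrib[symmetric])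
      also have "\<dots> \<le> 1 * e" using I[OF h1] t by (intro mult_mono) auto
      finally show ?thesis by simp
    qed
    ultimately show ?thesis using U I[OF t] by linarith
  qed
  note H = this
  have "\<bar>ww t - (t * IntK gw 1 - IntK gw t)\<bar> = 0"
  proof (rule ccontr)
    assume ne: "\<bar>ww t - (t * IntK gw 1 - IntK gw t)\<bar> \<noteq> 0"
    then have "0 < \<bar>ww t - (t * IntK gw 1 - IntK gw t)\<bar> / 6" by simp
    from H[OF this] ne show False by simp
  qed
  then show ?thesis unfolding sw_def by (simp add: mult.commute)
qed

end


context mainF begin

lemma ww_0: "ww 0 = 0" using ww_eq[of 0] unfolding IntK_def by simp
lemma ww_1: "ww 1 = 0" using ww_eq[of 1] unfolding sw_def by simp

lemma ww_big: "\<exists>ts\<in>{0..1}. \<delta>2 \<le> ww ts \<and> (\<forall>t\<in>{0..1}. ww t \<le> ww ts)"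
proof -
  obtain ts where ts: "ts \<in> {0..1}" "\<And>t. t \<in> {0..1} \<Longrightarrow> ww t \<le> ww ts"
  proof -
    have "\<exists>x\<in>{0..1}. \<forall>y\<in>{0..1}. ww y \<le> ww x"
      by (rule continuous_attains_sup[OF compact_Icc _ ww_cont]) simp
    then show ?thesis using that by blast
  qed
  have "\<delta>2 - e \<le> ww ts" if e: "0 < e" for e
  proof -
    obtain N where N: "\<forall>n x. n \<ge> N \<and> x \<in> {0..1} \<longrightarrow> \<bar>uu (kk n) x - ww x\<bar> < e" using ww_conv[OF e] by blast
    obtain t where t: "t \<in> {0..1}" "\<delta>2 < uu (kk N) t" using uu_big by blast
    have "\<bar>uu (kk N) t - ww t\<bar> < e" using N t by blast
    then show ?thesis using t ts(2)[OF t(1)] by linarith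
  qed
  then have "\<delta>2 \<le> ww ts"
  proof -
    assume H: "\<And>e. 0 < e \<Longrightarrow> \<delta>2 - e \<le> ww ts"
    show ?thesis
    proof (rule ccontr)
      assume "\<not> \<delta>2 \<le> ww ts"
      then have "0 < (\<delta>2 - ww ts) / 2" by simp
      from H[OF this] show False using \<open>\<not> \<delta>2 \<le> ww ts\<close> by (simp add: field_simps)
    qed
  qed
  then show ?thesis using ts by blast
qed

definition "dw t = sw - integral {0..t} gw"

lemma ww_deriv: "t \<in> {0..1} \<Longrightarrow> (ww has_real_derivative dw t) (at t within {0..1})"
  and dw_deriv: "t \<in> {0..1} \<Longrightarrow> (dw has_real_derivative - gw t) (at t within {0..1})"
  unfolding dw_def using formula_deriv[OF gw_cont ww_eq] by blast+

lemma dw_mono: "0 \<le> x \<Longrightarrow> x \<le> y \<Longrightarrow> y \<le> 1 \<Longrightarrow> dw y \<le> dw x"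
  by (rule mono01[where f=dw and f'="\<lambda>t. - gw t" and a=x and b=y]) (use dw_deriv gw_nn in auto)

lemma ww_pos: "0 < t \<Longrightarrow> t < 1 \<Longrightarrow> 0 < ww t"
proof -
  assume t: "0 < t" "t < 1"
  obtain ts where ts: "ts \<in> {0..1}" "\<delta>2 \<le> ww ts" using ww_big by blast
  have d2: "0 < \<delta>2" unfolding \<delta>2_def using dR by simp
  have ts0: "0 < ts" "ts < 1" using ts d2 ww_0 ww_1 by (auto simp: order_le_less)
  have conc: "(b - x) * ww a + (x - a) * ww b \<le> (b - a) * ww x" if "0 \<le> a" "a < x" "x < b" "b \<le> 1" for a b x
    by (rule concave01[where f=ww and f'=dw]) (use ww_deriv dw_mono that in auto)
  consider "t = ts" | "t < ts" | "ts < t" by linarith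
  then show ?thesis
  proof cases
    case 1 then show ?thesis using ts d2 by simp
  next
    case 2
    have "(ts - t) * ww 0 + (t - 0) * ww ts \<le> (ts - 0) * ww t" by (rule conc) (use t 2 ts in auto)
    then have "t * ww ts \<le> ts * ww t" using ww_0 by simp
    moreover have "0 < t * ww ts" using t ts d2 by simp
    ultimately have "0 < ts * ww t" by linarith
    then show ?thesis using ts0 by (simp add: zero_less_mult_iff)
  next
    case 3
    have "(1 - t) * ww ts + (t - ts) * ww 1 \<le> (1 - ts) * ww t" by (rule conc) (use t 3 ts in auto)
    then have "(1 - t) * ww ts \<le> (1 - ts) * ww t" using ww_1 by simp
    moreover have "0 < (1 - t) * ww ts" using t ts d2 by simp
    ultimately have "0 < (1 - ts) * ww t" by linarith
    then show ?thesis using ts0 by (simp add: zero_less_mult_iff)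
  qed
qed

theorem main_sol:
  "\<exists>u u' u''. continuous_on {0..1} u \<and> C2_on_open01 u u' u'' \<and> (\<forall>t\<in>{0<..<1}. u'' t + F t (u t) = 0)
     \<and> u 0 = 0 \<and> u 1 = 0 \<and> (\<forall>t\<in>{0<..<1}. 0 < u t)"
proof (intro exI conjI)
  show "continuous_on {0..1} ww" by (rule ww_cont)
  show "C2_on_open01 ww dw (\<lambda>t. - gw t)"
    unfolding C2_on_open01_def
  proof (intro conjI ballI)
    fix t :: real assume t: "t \<in> {0<..<1}"
    then have t1: "t \<in> {0..1}" by auto
    show "(ww has_real_derivative dw t) (at t)" using ww_deriv[OF t1] at01[OF t] by simp
    show "(dw has_real_derivative - gw t) (at t)" using dw_deriv[OF t1] at01[OF t] by simp
  next
    show "continuous_on {0<..<1} (\<lambda>t. - gw t)"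
      by (rule continuous_on_subset[of "{0..1}"]) (auto intro!: continuous_intros gw_cont)
  qed
  show "\<forall>t\<in>{0<..<1}. - gw t + F t (ww t) = 0" unfolding gw_def by simp
  show "ww 0 = 0" by (rule ww_0)
  show "ww 1 = 0" by (rule ww_1)
  show "\<forall>t\<in>{0<..<1}. 0 < ww t" using ww_pos by auto
qed

end


lemma rq2:
  assumes r: "0 < r1" "r1 < r2"
  shows "continuous_on {0..1} (radius_of 2 r1 r2)" "\<And>t. t \<in> {0..1} \<Longrightarrow> radius_of 2 r1 r2 t \<in> {r1..r2}"
    "continuous_on {0..1} (qfun 2 r1 r2)" "\<And>t. t \<in> {0..1} \<Longrightarrow> 0 < qfun 2 r1 r2 t"
proof -
  define a where "a = r1 / r2"
  have a: "0 < a" "a < 1" unfolding a_def using r by auto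
  have rad: "radius_of 2 r1 r2 = (\<lambda>t. r2 * a powr t)" unfolding radius_of_def a_def by auto
  have qf: "qfun 2 r1 r2 = (\<lambda>t. (r2 * a powr t * ln (r2 / r1))\<^sup>2)" unfolding qfun_def a_def by auto
  show "continuous_on {0..1} (radius_of 2 r1 r2)" unfolding rad using a by (intro continuous_intros) auto
  show "continuous_on {0..1} (qfun 2 r1 r2)" unfolding qf using a by (intro continuous_intros) auto
  fix t :: real assume t: "t \<in> {0..1}"
  have "a powr t \<le> a powr 0" by (rule powr_mono') (use t a in auto)
  then have u: "a powr t \<le> 1" using a by simp
  have "a powr 1 \<le> a powr t" by (rule powr_mono') (use t a in auto)
  then have l: "a \<le> a powr t" using a by simp
  have "r2 * a \<le> r2 * a powr t" "r2 * a powr t \<le> r2 * 1" using u l r by (intro mult_left_mono; simp)+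
  moreover have "r2 * a = r1" unfolding a_def using r by simp
  ultimately show "radius_of 2 r1 r2 t \<in> {r1..r2}" unfolding rad by simp
  have "0 < ln (r2 / r1)" using r by simp
  then show "0 < qfun 2 r1 r2 t" unfolding qf using a r by simp
qed

lemma rq3:
  assumes r: "0 < r1" "r1 < r2" and N: "3 \<le> N"
  shows "continuous_on {0..1} (radius_of N r1 r2)" "\<And>t. t \<in> {0..1} \<Longrightarrow> radius_of N r1 r2 t \<in> {r1..r2}"
    "continuous_on {0..1} (qfun N r1 r2)" "\<And>t. t \<in> {0..1} \<Longrightarrow> 0 < qfun N r1 r2 t"
proof -
  define k where "k = N - 2"
  have k: "1 \<le> k" "N \<noteq> 2" unfolding k_def using N by auto
  define D where "D = r2 ^ k - r1 ^ k"
  have D: "0 < D" unfolding D_def using r k by (simp add: power_strict_mono)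
  define A where "A = (r1 * r2) ^ k / D"
  define B where "B = r2 ^ k / D"
  have A: "0 < A" unfolding A_def using D r by simp
  have B1: "B - 1 = r1 ^ k / D" unfolding B_def D_def using D unfolding D_def by (simp add: field_simps)
  have B1p: "0 < B - 1" using B1 D r by simp
  have Bt: "0 < B - t" if "t \<in> {0..1}" for t using B1p that by auto
  have rad: "radius_of N r1 r2 = (\<lambda>t. (A / (B - t)) powr (1 / real k))"
    unfolding radius_of_def A_def B_def D_def k_def using k by (auto simp: Let_def)
  have qf: "qfun N r1 r2 = (\<lambda>t. (real k) powr (-2) * A powr (2 / real k) / (B - t) powr (2 * real (N - 1) / real k))"
    unfolding qfun_def A_def B_def D_def k_def using k by (auto simp: Let_def)
  show "continuous_on {0..1} (radius_of N r1 r2)" unfolding rad using A Bt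
    by (intro continuous_intros) (auto dest: Bt)
  show "continuous_on {0..1} (qfun N r1 r2)" unfolding qf using A Bt
    by (intro continuous_intros) (auto dest: Bt)
  fix t :: real assume t: "t \<in> {0..1}"
  have AB: "A / B = r1 ^ k" unfolding A_def B_def using D r by (simp add: power_mult_distrib)
  have AB1: "A / (B - 1) = r2 ^ k" unfolding B1 A_def using D r by (simp add: power_mult_distrib)
  have lo: "r1 ^ k \<le> A / (B - t)"
  proof -
    have "A / B \<le> A / (B - t)" using A Bt[OF t] t by (intro divide_left_mono) auto
    then show ?thesis using AB by simp
  qed
  have hi: "A / (B - t) \<le> r2 ^ k"
  proof -
    have "A / (B - t) \<le> A / (B - 1)" using A B1p t by (intro divide_left_mono) auto
    then show ?thesis using AB1 by simp
  qed
  have kk: "\<And>x::real. 0 < x \<Longrightarrow> (x ^ k) powr (1 / real k) = x"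
  proof -
    fix x :: real assume x: "0 < x"
    have "(x ^ k) powr (1 / real k) = (x powr real k) powr (1 / real k)" using x by (simp add: powr_realpow)
    also have "\<dots> = x powr (real k * (1 / real k))" by (rule powr_powr)
    also have "\<dots> = x" using k x by simp
    finally show "(x ^ k) powr (1 / real k) = x" .
  qed
  have "(r1 ^ k) powr (1 / real k) \<le> (A / (B - t)) powr (1 / real k)"
    by (rule powr_mono2) (use lo r in auto)
  moreover have "(A / (B - t)) powr (1 / real k) \<le> (r2 ^ k) powr (1 / real k)"
    by (rule powr_mono2) (use hi A Bt[OF t] in auto)
  ultimately show "radius_of N r1 r2 t \<in> {r1..r2}" unfolding rad using kk[of r1] kk[of r2] r by simp
  show "0 < qfun N r1 r2 t" unfolding qf using A Bt[OF t] k by simp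
qed

lemma rq:
  assumes r: "0 < r1" "r1 < r2" and N: "2 \<le> N"
  shows "continuous_on {0..1} (radius_of N r1 r2)" "\<And>t. t \<in> {0..1} \<Longrightarrow> radius_of N r1 r2 t \<in> {r1..r2}"
    "continuous_on {0..1} (qfun N r1 r2)" "\<And>t. t \<in> {0..1} \<Longrightarrow> 0 < qfun N r1 r2 t"
proof -
  have "N = 2 \<or> 3 \<le> N" using N by auto
  then show "continuous_on {0..1} (radius_of N r1 r2)" "\<And>t. t \<in> {0..1} \<Longrightarrow> radius_of N r1 r2 t \<in> {r1..r2}"
    "continuous_on {0..1} (qfun N r1 r2)" "\<And>t. t \<in> {0..1} \<Longrightarrow> 0 < qfun N r1 r2 t"
    using rq2[OF r] rq3[OF r] by blast+
qed


theorem theorem1p5: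
  fixes r1 r2 :: real and N :: nat and h :: "real \<Rightarrow> real \<Rightarrow> real"
    and b :: "real \<Rightarrow> real" and c \<delta> R lam :: real
  assumes r: "0 < r1" "r1 < r2" and N: "N \<ge> 2"
    and h_cont: "continuous_on ({r1..r2} \<times> {0..}) (\<lambda>(t, u). h t u)"
    and h_nonneg: "\<forall>t\<in>{r1..r2}. \<forall>u\<ge>0. h t u \<ge> 0"
    and h_zero: "\<forall>t\<in>{r1..r2}. h t 0 = 0"
    and b_cont: "continuous_on {0..1} b"
    and b_nonneg: "\<forall>t\<in>{0..1}. b t \<ge> 0"
    and b_nz: "\<exists>t\<in>{0..1}. b t \<noteq> 0"
    and c: "c > 1" and \<delta>: "0 < \<delta>" "\<delta> < R"
    and hyp_i: "\<forall>t\<in>{0<..<1}. \<forall>u\<in>{0<..<\<delta>}. ffun N r1 r2 h t u \<le> b t * u"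
    and hyp_ii: "\<forall>t\<in>{0<..<1}. \<forall>u\<ge>R. ffun N r1 r2 h t u \<ge> c * b t * u"
    and lam: "lambda1 (\<lambda>t. qfun N r1 r2 t * b t) / c < lam"
             "lam < lambda1 (\<lambda>t. qfun N r1 r2 t * b t)"
  shows "\<exists>u. positive_solution (qfun N r1 r2) (ffun N r1 r2 h) lam u"
proof -
  define q where "q = qfun N r1 r2"
  define f where "f = ffun N r1 r2 h"
  define m where "m = (\<lambda>t. qfun N r1 r2 t * b t)"
  note RQ = rq[OF r N]
  have qc: "continuous_on {0..1} q" and qp: "\<And>t. t \<in> {0..1} \<Longrightarrow> 0 < q t" unfolding q_def using RQ by auto
  have radc: "continuous_on {0..1} (radius_of N r1 r2)" and radr: "\<And>t. t \<in> {0..1} \<Longrightarrow> radius_of N r1 r2 t \<in> {r1..r2}"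
    using RQ by auto
  have W: "weight m"
  proof
    show "continuous_on {0..1} m" unfolding m_def using qc b_cont unfolding q_def by (intro continuous_intros)
    show "\<And>t. t \<in> {0..1} \<Longrightarrow> 0 \<le> m t" unfolding m_def using qp b_nonneg unfolding q_def
      by (simp add: less_imp_le)
    obtain t where t: "t \<in> {0..1}" "b t \<noteq> 0" using b_nz by blast
    moreover have "0 \<le> b t" using b_nonneg t(1) by blast
    ultimately have "0 < b t" by simp
    then show "\<exists>t\<in>{0..1}. 0 < m t" unfolding m_def using t qp[OF t(1)] unfolding q_def by (intro bexI[of _ t]) auto
  qed
  interpret weight m by (rule W)
  have L1: "lambda1 (\<lambda>t. qfun N r1 r2 t * b t) = lam1" unfolding m_def[symmetric] by (rule lambda1_eq)
  have lp: "0 < lam"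
  proof -
    have "0 < lam1 / c" using lam1_pos c by simp
    moreover have "lam1 / c < lam" using lam(1) L1 by simp
    ultimately show ?thesis by linarith
  qed
  define F where "F t x = lam * q t * f t x" for t x
  have fc: "continuous_on ({0..1} \<times> {0..}) (\<lambda>(t,x). f t x)"
  proof -
    have "continuous_on ({0..1} \<times> {0..}) ((\<lambda>(t, u). h t u) \<circ> (\<lambda>p. (radius_of N r1 r2 (fst p), snd p)))"
    proof (rule continuous_on_compose)
      show "continuous_on ({0..1} \<times> {0..}) (\<lambda>p. (radius_of N r1 r2 (fst p), snd p))"
        by (intro continuous_intros continuous_on_compose2[OF radc]) auto
      show "continuous_on ((\<lambda>p. (radius_of N r1 r2 (fst p), snd p)) ` ({0..1} \<times> {0..})) (\<lambda>(t, u). h t u)"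
        by (rule continuous_on_subset[OF h_cont]) (auto dest: radr)
    qed
    then show ?thesis unfolding f_def ffun_def by (simp add: o_def case_prod_beta)
  qed
  have fnn: "0 \<le> f t x" if "t \<in> {0..1}" "0 \<le> x" for t x
    unfolding f_def ffun_def using h_nonneg radr[OF that(1)] that(2) by blast
  have f0: "f t 0 = 0" if "t \<in> {0..1}" for t
    unfolding f_def ffun_def using h_zero radr[OF that] by blast
  have fcx: "continuous_on {0..1} (\<lambda>t. f t x)" if "0 \<le> x" for x
  proof -
    have "continuous_on {0..1} ((\<lambda>(t,x). f t x) \<circ> (\<lambda>t. (t, x)))"
      by (rule continuous_on_compose) (intro continuous_intros, rule continuous_on_subset[OF fc], use that in auto)
    then show ?thesis by (simp add: o_def)
  qed
  have fup: "f t x \<le> b t * x" if t: "t \<in> {0..1}" and x: "0 \<le> x" "x < \<delta>" for t x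
  proof (cases "x = 0")
    case True then show ?thesis using f0[OF t] by simp
  next
    case False
    then have x': "x \<in> {0<..<\<delta>}" using x by auto
    have "0 \<le> b t * x - f t x"
    proof (rule closure01_ge[OF _ _ t])
      show "continuous_on {0..1} (\<lambda>t. b t * x - f t x)" by (intro continuous_intros b_cont fcx) (use x in auto)
      show "\<And>t. t \<in> {0<..<1} \<Longrightarrow> 0 \<le> b t * x - f t x" using hyp_i x' unfolding f_def by fastforce
    qed
    then show ?thesis by simp
  qed
  have flow: "c * b t * x \<le> f t x" if t: "t \<in> {0..1}" and x: "R \<le> x" for t x
  proof -
    have "0 \<le> f t x - c * b t * x"
    proof (rule closure01_ge[OF _ _ t])
      show "continuous_on {0..1} (\<lambda>t. f t x - c * b t * x)" by (intro continuous_intros b_cont fcx) (use x \<delta> in auto)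
      show "\<And>t. t \<in> {0<..<1} \<Longrightarrow> 0 \<le> f t x - c * b t * x" using hyp_ii x unfolding f_def by fastforce
    qed
    then show ?thesis by simp
  qed
  have M: "mainF m F lam c \<delta> R"
  proof (unfold_locales)
    show "continuous_on ({0..1} \<times> {0..}) (\<lambda>(t, x). F t x)"
    proof -
      have "continuous_on ({0..1} \<times> {0..}) (\<lambda>p. lam * q (fst p) * (\<lambda>(t,x). f t x) p)"
        by (intro continuous_intros fc continuous_on_compose2[OF qc]) auto
      then show ?thesis unfolding F_def by (simp add: case_prod_beta)
    qed
    fix t x :: real
    show "t \<in> {0..1} \<Longrightarrow> 0 \<le> x \<Longrightarrow> 0 \<le> F t x" unfolding F_def using lp qp fnn
      by (simp add: less_imp_le)
    show "t \<in> {0..1} \<Longrightarrow> 0 \<le> x \<Longrightarrow> x < \<delta> \<Longrightarrow> F t x \<le> lam * m t * x"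
    proof -
      assume a: "t \<in> {0..1}" "0 \<le> x" "x < \<delta>"
      have "lam * q t * f t x \<le> lam * q t * (b t * x)" using fup[OF a] lp qp[OF a(1)] by (intro mult_left_mono) auto
      then show ?thesis unfolding F_def m_def q_def by (simp add: algebra_simps)
    qed
    show "t \<in> {0..1} \<Longrightarrow> R \<le> x \<Longrightarrow> c * lam * m t * x \<le> F t x"
    proof -
      assume a: "t \<in> {0..1}" "R \<le> x"
      have "lam * q t * (c * b t * x) \<le> lam * q t * f t x" using flow[OF a] lp qp[OF a(1)] by (intro mult_left_mono) auto
      then show ?thesis unfolding F_def m_def q_def by (simp add: algebra_simps)
    qed
  next
    show "0 < lam" by (rule lp)
    show "lam < lam1" using lam(2) L1 by simp
    show "lam1 < c * lam" using lam(1) L1 c by (simp add: divide_less_eq mult.commute)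
    show "0 < c" using c by simp
    show "0 < \<delta>" "\<delta> < R" using \<delta> by auto
  qed
  obtain u u' u'' where u: "continuous_on {0..1} u" "C2_on_open01 u u' u''"
    "\<forall>t\<in>{0<..<1}. u'' t + F t (u t) = 0" "u 0 = 0" "u 1 = 0" "\<forall>t\<in>{0<..<1}. 0 < u t"
    using mainF.main_sol[OF M] by blast
  have "positive_solution (qfun N r1 r2) (ffun N r1 r2 h) lam u"
    unfolding positive_solution_def using u unfolding F_def q_def f_def by auto
  then show ?thesis by blast
qed


end
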